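(* Let $q$ be a prime power, $m\ge2$, $s,\ell,r_1,\dots,r_m\ge1$ integers, $k=m\ell-s$ with $k\ge\ell$, $n=\sum_{i=1}^m(\ell+r_i)$, $R=\sum_i r_i$. For $\alpha=(\alpha_{w,z})\in\mathbb{F}_q^{sk}$ and $\beta=(\beta_{t,i,j})\in\mathbb{F}_q^{\ell R}$ ($1\le w\le k$, $1\le z\le s$, $1\le t\le\ell$, $1\le i\le m$, $1\le j\le r_i$) let $G(\alpha,\beta)=(C_1\mid D_1\mid\dots\mid C_m\mid D_m)\in\mathbb{F}_q^{k\times n}$, where $(C_1\mid\dots\mid C_m)=[I_k\mid A]$ with $A=(\alpha_{w,z})\in\mathbb{F}_q^{k\times s}$, each $C_i$ has $\ell$ columns, and $D_i\in\mathbb{F}_q^{k\times r_i}$ has $j$-th column $\sum_{t=1}^\ell\beta_{t,i,j}C_i^{(t)}$, $C_i^{(t)}$ being the $t$-th column of $C_i$. If the entries of $\alpha$ and $\beta$ are chosen independently and uniformly at random in $\mathbb{F}_q$, then the probability that the row space of $G(\alpha,\beta)$ is an $[n,k,\ell;r_1,\dots,r_m]$-PMDS code is at least $$1-\frac{2(n-k)\binom{n-1}{k-1}}{q}.$$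
   Context: An $[n,k]$-MDS code over a field $\mathbb{F}$ is a linear code in $\mathbb{F}^n$ of dimension $k$ and minimum Hamming distance $n-k+1$. PMDS codes: let $\ell,m,r_1,\dots,r_m$ be positive integers, $n=\sum_{i=1}^m(r_i+\ell)$, and $C\subseteq\mathbb{F}^n$ a linear code of dimension $k<n$ with generator matrix $G=(B_1\mid\dots\mid B_m)$, $B_i\in\mathbb{F}^{k\times(r_i+\ell)}$ (here $B_i=(C_i\mid D_i)$). Then $C$ is an $[n,k,\ell;r_1,\dots,r_m]$-PMDS code if (i) for each $i$ the row space of $B_i$ is an $[r_i+\ell,\ell]$-MDS code, and (ii) for any choice of $r_i$ erased coordinates in the $i$-th block for every $i$, the code obtained from $C$ by puncturing these coordinates is an $[m\ell,k]$-MDS code. *)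

theory Defs
  imports Complex_Main "HOL-Library.FuncSet" "HOL-Library.Function_Algebras"
begin

(* Vectors of F^n are represented as functions nat => 'a that vanish outside the
   relevant coordinate set; a code is a set of such vectors. *)

definition sc :: "'a::field \<Rightarrow> (nat \<Rightarrow> 'a) \<Rightarrow> (nat \<Rightarrow> 'a)" where
  "sc c x = (\<lambda>j. c * x j)"

definition code_dim :: "(nat \<Rightarrow> 'a::field) set \<Rightarrow> nat" where
  "code_dim C = vector_space.dim sc C"

definition row_space :: "nat \<Rightarrow> nat \<Rightarrow> (nat \<Rightarrow> nat \<Rightarrow> 'a::field) \<Rightarrow> (nat \<Rightarrow> 'a) set" where
  "row_space K N G = {x. \<exists>c. x = (\<lambda>j. if j < N then (\<Sum>w<K. c w * G w j) else 0)}"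

definition hdist :: "nat set \<Rightarrow> (nat \<Rightarrow> 'a) \<Rightarrow> (nat \<Rightarrow> 'a) \<Rightarrow> nat" where
  "hdist S x y = card {j \<in> S. x j \<noteq> y j}"

definition min_dist :: "nat set \<Rightarrow> (nat \<Rightarrow> 'a) set \<Rightarrow> nat" where
  "min_dist S C = Inf {hdist S x y | x y. x \<in> C \<and> y \<in> C \<and> x \<noteq> y}"

definition restrict_code :: "nat set \<Rightarrow> (nat \<Rightarrow> 'a::zero) set \<Rightarrow> (nat \<Rightarrow> 'a) set" where
  "restrict_code S C = (\<lambda>x j. if j \<in> S then x j else 0) ` C"

definition is_MDS_on :: "nat set \<Rightarrow> nat \<Rightarrow> (nat \<Rightarrow> 'a::field) set \<Rightarrow> bool" where
  "is_MDS_on S K C \<longleftrightarrow> code_dim C = K \<and> min_dist S C = card S - K + 1"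

(* offset of block i (0-based); block i has l + r i columns *)
definition blk_off :: "nat \<Rightarrow> (nat \<Rightarrow> nat) \<Rightarrow> nat \<Rightarrow> nat" where
  "blk_off l r i = (\<Sum>i'<i. l + r i')"

definition blk :: "nat \<Rightarrow> (nat \<Rightarrow> nat) \<Rightarrow> nat \<Rightarrow> nat set" where
  "blk l r i = {blk_off l r i ..< blk_off l r i + l + r i}"

definition is_PMDS :: "nat \<Rightarrow> nat \<Rightarrow> nat \<Rightarrow> (nat \<Rightarrow> nat) \<Rightarrow> (nat \<Rightarrow> 'a::field) set \<Rightarrow> bool" where
  "is_PMDS k l m r C \<longleftrightarrow>
     (let n = (\<Sum>i<m. l + r i) in
       code_dim C = k \<and> k < n \<and>
       (\<forall>i<m. is_MDS_on (blk l r i) l (restrict_code (blk l r i) C)) \<and>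
       (\<forall>E :: nat \<Rightarrow> nat set. (\<forall>i<m. E i \<subseteq> blk l r i \<and> card (E i) = r i) \<longrightarrow>
          is_MDS_on ({0..<n} - (\<Union>i<m. E i)) k
                    (restrict_code ({0..<n} - (\<Union>i<m. E i)) C)))"

(* column c (c < m*l) of [I_k | A], A = (alpha(w,z)), k = m*l - s *)
definition Cmat :: "nat \<Rightarrow> (nat \<times> nat \<Rightarrow> 'a::field) \<Rightarrow> nat \<Rightarrow> nat \<Rightarrow> 'a" where
  "Cmat k \<alpha> w c = (if c < k then (if w = c then 1 else 0) else \<alpha> (w, c - k))"

(* G(alpha,beta) = (C_1 | D_1 | ... | C_m | D_m), row w, column c;
   D_i column j = sum_t beta(t,i,j) * (t-th column of C_i), all indices 0-based *)
definition genmat :: "nat \<Rightarrow> nat \<Rightarrow> nat \<Rightarrow> (nat \<Rightarrow> nat) \<Rightarrow>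
     (nat \<times> nat \<Rightarrow> 'a::field) \<Rightarrow> (nat \<times> nat \<times> nat \<Rightarrow> 'a) \<Rightarrow> nat \<Rightarrow> nat \<Rightarrow> 'a" where
  "genmat k l m r \<alpha> \<beta> w c =
     (if \<exists>i<m. c \<in> blk l r i then
        (let i = (THE i. i < m \<and> c \<in> blk l r i); p = c - blk_off l r i in
          if p < l then Cmat k \<alpha> w (i * l + p)
          else (\<Sum>t<l. \<beta> (t, i, p - l) * Cmat k \<alpha> w (i * l + t)))
      else 0)"

end

theory Submission
  imports Defs "HOL-Computational_Algebra.Polynomial" "Jordan_Normal_Form.Determinant"
begin

fun pf :: "'v list \<Rightarrow> nat \<Rightarrow> (('v \<Rightarrow> 'a::comm_ring_1) \<Rightarrow> 'a) \<Rightarrow> bool" where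
  "pf [] d f = (\<exists>c. f = (\<lambda>_. c))"
| "pf (v#vs) d f = (\<exists>g. (\<forall>e. pf vs (d-e) (g e)) \<and> (\<forall>e>d. g e = (\<lambda>_. 0))
      \<and> f = (\<lambda>x. \<Sum>e\<le>d. x v ^ e * g e x))"

lemma pf_const: "pf vs d (\<lambda>_. c)"
proof (induction vs arbitrary: d c)
  case Nil then show ?case by auto
next
  case (Cons v vs)
  let ?g = "\<lambda>e x. if e = 0 then c else 0"
  have "(\<lambda>x. c) = (\<lambda>x. \<Sum>e\<le>d. x v ^ e * ?g e x)"
  proof
    fix x
    have "(\<Sum>e\<le>d. x v ^ e * ?g e x) = (\<Sum>e\<le>d. if e = 0 then c else 0)"
      by (rule sum.cong) auto
    then show "c = (\<Sum>e\<le>d. x v ^ e * ?g e x)" by simp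
  qed
  moreover have "\<forall>e. pf vs (d-e) (?g e)" using Cons by auto
  moreover have "\<forall>e>d. ?g e = (\<lambda>_. 0)" by auto
  ultimately show ?case by (auto intro!: exI[of _ ?g])
qed

lemma pf_dep: "pf vs d f \<Longrightarrow> (\<forall>u\<in>set vs. x u = y u) \<Longrightarrow> f x = f y"
proof (induction vs arbitrary: d f)
  case Nil then show ?case by auto
next
  case (Cons v vs)
  then obtain g where g: "\<forall>e. pf vs (d-e) (g e)" "f = (\<lambda>x. \<Sum>e\<le>d. x v ^ e * g e x)" by auto
  have "g e x = g e y" for e using Cons.IH[OF g(1)[rule_format, of e]] Cons.prems(2) by auto
  then show ?case using g(2) Cons.prems(2) by simp
qed

lemma pf_mono: "pf vs d f \<Longrightarrow> d \<le> d' \<Longrightarrow> pf vs d' f"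
proof (induction vs arbitrary: d d' f)
  case Nil then show ?case by auto
next
  case (Cons v vs)
  then obtain g where g: "\<forall>e. pf vs (d-e) (g e)" "\<forall>e>d. g e = (\<lambda>_. 0)"
     "f = (\<lambda>x. \<Sum>e\<le>d. x v ^ e * g e x)" by auto
  have 1: "\<forall>e. pf vs (d'-e) (g e)" using g(1) Cons.IH Cons.prems(2) by (meson diff_le_mono)
  have 2: "\<forall>e>d'. g e = (\<lambda>_. 0)" using g(2) Cons.prems(2) by auto
  have "(\<Sum>e\<le>d'. x v ^ e * g e x) = (\<Sum>e\<le>d. x v ^ e * g e x)" for x
    by (rule sum.mono_neutral_right) (use g(2) Cons.prems(2) in auto)
  then have "f = (\<lambda>x. \<Sum>e\<le>d'. x v ^ e * g e x)" using g(3) by simp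
  then show ?case using 1 2 by auto
qed

lemma pf_add: "pf vs d f \<Longrightarrow> pf vs d h \<Longrightarrow> pf vs d (\<lambda>x. f x + h x)"
proof (induction vs arbitrary: d f h)
  case Nil then show ?case by auto
next
  case (Cons v vs)
  obtain g where g: "\<forall>e. pf vs (d-e) (g e)" "\<forall>e>d. g e = (\<lambda>_. 0)"
     "f = (\<lambda>x. \<Sum>e\<le>d. x v ^ e * g e x)" using Cons.prems(1) by auto
  obtain k where k: "\<forall>e. pf vs (d-e) (k e)" "\<forall>e>d. k e = (\<lambda>_. 0)"
     "h = (\<lambda>x. \<Sum>e\<le>d. x v ^ e * k e x)" using Cons.prems(2) by auto
  let ?g = "\<lambda>e x. g e x + k e x"
  have "\<forall>e. pf vs (d-e) (?g e)" using g(1) k(1) Cons.IH by auto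
  moreover have "\<forall>e>d. ?g e = (\<lambda>_. 0)" using g(2) k(2) by auto
  moreover have "(\<lambda>x. f x + h x) = (\<lambda>x. \<Sum>e\<le>d. x v ^ e * ?g e x)"
    using g(3) k(3) by (auto simp: sum.distrib algebra_simps)
  ultimately show ?case by (auto intro!: exI[of _ ?g])
qed

lemma pf_sum: "finite S \<Longrightarrow> (\<And>i. i \<in> S \<Longrightarrow> pf vs d (f i)) \<Longrightarrow> pf vs d (\<lambda>x. \<Sum>i\<in>S. f i x)"
proof (induction S rule: finite_induct)
  case empty then show ?case using pf_const[of vs d 0] by simp
next
  case (insert a S)
  then show ?case using pf_add[of vs d "f a" "\<lambda>x. \<Sum>i\<in>S. f i x"] by simp
qed

lemma pf_monomial: "pf vs d' g \<Longrightarrow> pf (v#vs) (d'+E) (\<lambda>x. x v ^ E * g x)"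
proof -
  assume g: "pf vs d' g"
  let ?g = "\<lambda>e x. if e = E then g x else 0"
  have "\<forall>e. pf vs (d'+E-e) (?g e)"
  proof
    fix e show "pf vs (d'+E-e) (?g e)" by (cases "e = E") (simp_all add: g pf_const del: pf.simps)
  qed
  moreover have "\<forall>e>d'+E. ?g e = (\<lambda>_. 0)" by auto
  moreover have "(\<lambda>x. x v ^ E * g x) = (\<lambda>x. \<Sum>e\<le>d'+E. x v ^ e * ?g e x)"
  proof
    fix x
    have "(\<Sum>e\<le>d'+E. x v ^ e * ?g e x) = (\<Sum>e\<le>d'+E. if e = E then x v ^ E * g x else 0)"
      by (rule sum.cong) auto
    then show "x v ^ E * g x = (\<Sum>e\<le>d'+E. x v ^ e * ?g e x)" by simp
  qed
  ultimately show ?thesis by (auto intro!: exI[of _ ?g])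
qed

lemma pf_mul: "pf vs d1 f \<Longrightarrow> pf vs d2 h \<Longrightarrow> pf vs (d1+d2) (\<lambda>x. f x * h x)"
proof (induction vs arbitrary: d1 d2 f h)
  case Nil then show ?case by auto
next
  case (Cons v vs)
  obtain g where g: "\<forall>e. pf vs (d1-e) (g e)" "\<forall>e>d1. g e = (\<lambda>_. 0)"
     "f = (\<lambda>x. \<Sum>e\<le>d1. x v ^ e * g e x)" using Cons.prems(1) by auto
  obtain k where k: "\<forall>e. pf vs (d2-e) (k e)" "\<forall>e>d2. k e = (\<lambda>_. 0)"
     "h = (\<lambda>x. \<Sum>e\<le>d2. x v ^ e * k e x)" using Cons.prems(2) by auto
  have eq: "(\<lambda>x. f x * h x) = (\<lambda>x. \<Sum>e\<le>d1. \<Sum>e'\<le>d2. x v ^ (e+e') * (g e x * k e' x))"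
    unfolding g(3) k(3) sum_product by (simp add: power_add mult_ac)
  have "pf (v#vs) (d1+d2) (\<lambda>x. x v ^ (e+e') * (g e x * k e' x))" if "e \<le> d1" "e' \<le> d2" for e e'
  proof -
    have "pf vs ((d1-e)+(d2-e')) (\<lambda>x. g e x * k e' x)" using Cons.IH g(1) k(1) by auto
    from pf_monomial[OF this, of v "e+e'"] have "pf (v#vs) ((d1-e)+(d2-e')+(e+e')) (\<lambda>x. x v ^ (e+e') * (g e x * k e' x))" .
    moreover have "(d1-e)+(d2-e')+(e+e') = d1+d2" using that by simp
    ultimately show ?thesis by simp
  qed
  then have "pf (v#vs) (d1+d2) (\<lambda>x. \<Sum>e\<le>d1. \<Sum>e'\<le>d2. x v ^ (e+e') * (g e x * k e' x))"
    by (intro pf_sum) auto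
  then show ?case using eq by simp
qed

lemma pf_prod: "finite S \<Longrightarrow> (\<And>i. i \<in> S \<Longrightarrow> pf vs (d i) (f i)) \<Longrightarrow> pf vs (\<Sum>i\<in>S. d i) (\<lambda>x. \<Prod>i\<in>S. f i x)"
proof (induction S rule: finite_induct)
  case empty then show ?case using pf_const[of vs 0 1] by simp
next
  case (insert a S)
  then show ?case using pf_mul[of vs "d a" "f a" "sum d S" "\<lambda>x. \<Prod>i\<in>S. f i x"] by simp
qed

lemma pf_var: "u \<in> set vs \<Longrightarrow> pf vs 1 (\<lambda>x::'v\<Rightarrow>'a::comm_ring_1. x u)"
proof (induction vs)
  case Nil then show ?case by simp
next
  case (Cons v vs)
  show ?case
  proof (cases "u = v")
    case True
    have "pf vs 0 (\<lambda>_::'v\<Rightarrow>'a. 1)" by (rule pf_const)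
    from pf_monomial[OF this, of v 1] show ?thesis using True by (simp del: pf.simps)
  next
    case False
    then have "pf vs 1 (\<lambda>x::'v\<Rightarrow>'a. x u)" using Cons by auto
    from pf_monomial[OF this, of v 0] show ?thesis by (simp del: pf.simps)
  qed
qed


lemma PiE_insert_inj:
  assumes "v \<notin> V"
  shows "inj_on (\<lambda>(a,y). y(v:=a)) (UNIV \<times> (V \<rightarrow>\<^sub>E B))"
proof (rule inj_onI, clarify)
  fix a y a' y'
  assume y: "y \<in> V \<rightarrow>\<^sub>E B" and y': "y' \<in> V \<rightarrow>\<^sub>E B" and eq: "y(v := a) = y'(v := a')"
  have "a = a'" using fun_cong[OF eq, of v] by simp
  moreover have "y = y'"
  proof
    fix u show "y u = y' u"
    proof (cases "u = v")
      case True then show ?thesis using y y' assms by (auto simp: PiE_def extensional_def)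
    next
      case False then show ?thesis using fun_cong[OF eq, of u] by simp
    qed
  qed
  ultimately show "a = a' \<and> y = y'" by simp
qed

lemma SZ:
  fixes f :: "('v \<Rightarrow> 'a::{finite,field}) \<Rightarrow> 'a"
  assumes "distinct vs" "pf vs d f" "f x0 \<noteq> 0"
  shows "card {x \<in> set vs \<rightarrow>\<^sub>E (UNIV::'a set). f x = 0} * card (UNIV::'a set) \<le> d * card (UNIV::'a set) ^ length vs"
  using assms
proof (induction vs arbitrary: d f x0)
  case Nil
  then obtain c where "f = (\<lambda>_. c)" by auto
  with Nil have e: "{x \<in> set [] \<rightarrow>\<^sub>E (UNIV::'a set). f x = 0} = {}" by auto
  show ?case by (simp only: e) simp
next
  case (Cons v vs)
  let ?q = "card (UNIV::'a set)"
  let ?V = "set vs"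
  have vV: "v \<notin> ?V" and dist: "distinct vs" using Cons.prems(1) by auto
  obtain g where g1: "\<forall>e. pf vs (d-e) (g e)" and g2: "\<forall>e>d. g e = (\<lambda>_. 0)"
     and g3: "f = (\<lambda>x. \<Sum>e\<le>d. x v ^ e * g e x)" using Cons.prems(2) by auto
  define E where "E = {e. e \<le> d \<and> (\<exists>x. g e x \<noteq> 0)}"
  have finE: "finite E" unfolding E_def by auto
  have "E \<noteq> {}"
  proof
    assume "E = {}"
    then have "\<forall>e\<le>d. g e x0 = 0" unfolding E_def by auto
    then have "f x0 = 0" unfolding g3 by simp
    with Cons.prems(3) show False by simp
  qed
  define es where "es = Max E"
  have esE: "es \<in> E" unfolding es_def using finE \<open>E \<noteq> {}\<close> by (rule Max_in)
  then have esd: "es \<le> d" and "\<exists>x. g es x \<noteq> 0" unfolding E_def by auto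
  then obtain x1 where x1: "g es x1 \<noteq> 0" by auto
  have gz: "g e x = 0" if "e > es" for e x
  proof (cases "e \<le> d")
    case True
    then have "e \<notin> E" using that finE unfolding es_def using Max_ge leD by blast
    then show ?thesis using True unfolding E_def by auto
  next
    case False then show ?thesis using g2 by auto
  qed
  have IH: "card {x \<in> ?V \<rightarrow>\<^sub>E (UNIV::'a set). g es x = 0} * ?q \<le> (d - es) * ?q ^ length vs"
    using Cons.IH[OF dist g1[rule_format, of es] x1] .
  define A where "A = {y \<in> ?V \<rightarrow>\<^sub>E (UNIV::'a set). g es y = 0}"
  define Bs where "Bs = {y \<in> ?V \<rightarrow>\<^sub>E (UNIV::'a set). g es y \<noteq> 0}"
  define Z' where "Z' = {(a,y). a \<in> (UNIV::'a set) \<and> y \<in> ?V \<rightarrow>\<^sub>E (UNIV::'a set) \<and> f (y(v:=a)) = 0}"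
  have cardPiV: "card (?V \<rightarrow>\<^sub>E (UNIV::'a set)) = ?q ^ length vs"
    using dist by (simp add: card_PiE distinct_card)
  have roots: "card {a. f (y(v:=a)) = 0} \<le> es" if y: "y \<in> Bs" for y
  proof -
    have gy: "g e (y(v:=a)) = g e y" for e a
      using pf_dep[OF g1[rule_format, of e]] vV by auto
    define P where "P = (\<Sum>e\<le>es. monom (g e y) e)"
    have "f (y(v:=a)) = (\<Sum>e\<le>d. a ^ e * g e y)" for a unfolding g3 gy by simp
    also have "(\<Sum>e\<le>d. a ^ e * g e y) = (\<Sum>e\<le>es. a ^ e * g e y)" for a
      by (rule sum.mono_neutral_right) (use esd gz in auto)
    also have "(\<Sum>e\<le>es. a ^ e * g e y) = poly P a" for a
      unfolding P_def by (simp add: poly_sum poly_monom mult.commute)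
    finally have eqP: "f (y(v:=a)) = poly P a" for a .
    have "coeff P es = g es y" unfolding P_def by (simp add: coeff_sum)
    then have "P \<noteq> 0" using y unfolding Bs_def by auto
    have "degree P \<le> es" unfolding P_def
      by (rule degree_sum_le) (auto intro: order.trans[OF degree_monom_le])
    then show ?thesis using card_poly_roots_bound[OF \<open>P \<noteq> 0\<close>] eqP by simp
  qed
  have finBs: "finite Bs" unfolding Bs_def by (rule finite_subset[of _ "?V \<rightarrow>\<^sub>E (UNIV::'a set)"]) (auto intro: finite_PiE)
  have Zsub: "Z' \<subseteq> ((UNIV::'a set) \<times> A) \<union> (\<Union>y\<in>Bs. (\<lambda>a. (a,y)) ` {a. f (y(v:=a)) = 0})"
    unfolding Z'_def A_def Bs_def by auto
  have "card Z' \<le> card ((UNIV::'a set) \<times> A) + card (\<Union>y\<in>Bs. (\<lambda>a. (a,y)) ` {a. f (y(v:=a)) = 0})"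
  proof -
    have fin: "finite (((UNIV::'a set) \<times> A) \<union> (\<Union>y\<in>Bs. (\<lambda>a. (a,y)) ` {a. f (y(v:=a)) = 0}))"
    proof (rule finite_UnI)
      have "finite A" unfolding A_def by (rule finite_subset[of _ "?V \<rightarrow>\<^sub>E (UNIV::'a set)"]) (auto intro: finite_PiE)
      then show "finite ((UNIV::'a set) \<times> A)" by (intro finite_cartesian_product) auto
      have "finite Bs" unfolding Bs_def by (rule finite_subset[of _ "?V \<rightarrow>\<^sub>E (UNIV::'a set)"]) (auto intro: finite_PiE)
      then show "finite (\<Union>y\<in>Bs. (\<lambda>a. (a,y)) ` {a. f (y(v:=a)) = 0})" by simp
    qed
    show ?thesis using card_mono[OF fin Zsub] card_Un_le order.trans by blast
  qed
  also have "card ((UNIV::'a set) \<times> A) = ?q * card A" by (simp add: card_cartesian_product)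
  also have "card (\<Union>y\<in>Bs. (\<lambda>a. (a,y)) ` {a. f (y(v:=a)) = 0}) \<le> (\<Sum>y\<in>Bs. card ((\<lambda>a. (a,y)) ` {a. f (y(v:=a)) = 0}))"
    by (rule card_UN_le[OF finBs])
  also have "\<dots> \<le> (\<Sum>y\<in>Bs. es)"
  proof (rule sum_mono)
    fix y assume "y \<in> Bs"
    have "card ((\<lambda>a. (a,y)) ` {a. f (y(v:=a)) = 0}) \<le> card {a. f (y(v:=a)) = 0}"
      by (rule card_image_le) simp
    also have "\<dots> \<le> es" by (rule roots) fact
    finally show "card ((\<lambda>a. (a,y)) ` {a. f (y(v:=a)) = 0}) \<le> es" .
  qed
  also have "\<dots> \<le> ?q ^ length vs * es"
  proof -
    have "card Bs \<le> card (?V \<rightarrow>\<^sub>E (UNIV::'a set))" unfolding Bs_def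
      by (rule card_mono) (auto simp: finite_PiE)
    then show ?thesis using cardPiV by simp
  qed
  finally have cZ': "card Z' \<le> ?q * card A + ?q ^ length vs * es" by simp
  have Zeq: "{x \<in> set (v#vs) \<rightarrow>\<^sub>E (UNIV::'a set). f x = 0} = (\<lambda>(a,y). y(v:=a)) ` Z'"
  proof -
    have "set (v#vs) \<rightarrow>\<^sub>E (UNIV::'a set) = (\<lambda>(a,y). y(v:=a)) ` (UNIV \<times> (?V \<rightarrow>\<^sub>E UNIV))"
      by (simp add: PiE_insert_eq)
    then show ?thesis unfolding Z'_def by auto
  qed
  have "card {x \<in> set (v#vs) \<rightarrow>\<^sub>E (UNIV::'a set). f x = 0} = card Z'"
    unfolding Zeq
    by (rule card_image, rule inj_on_subset[OF PiE_insert_inj[OF vV]]) (auto simp: Z'_def)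
  then have "card {x \<in> set (v#vs) \<rightarrow>\<^sub>E (UNIV::'a set). f x = 0} * ?q \<le> (?q * card A + ?q ^ length vs * es) * ?q"
    using cZ' by simp
  also have "\<dots> = ?q * (card A * ?q) + ?q ^ Suc (length vs) * es" by (simp add: algebra_simps)
  also have "\<dots> \<le> ?q * ((d - es) * ?q ^ length vs) + ?q ^ Suc (length vs) * es"
    using IH unfolding A_def by simp
  also have "\<dots> = ((d - es) + es) * ?q ^ Suc (length vs)" by (simp add: algebra_simps)
  also have "\<dots> = d * ?q ^ length (v#vs)" using esd by simp
  finally show ?case .
qed

lemma sum_fun_app: "(sum F t) j = (\<Sum>v\<in>t. F v j)" for F :: "'b \<Rightarrow> nat \<Rightarrow> 'a::comm_monoid_add"
  by (induct t rule: infinite_finite_induct) auto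

lemma vs_sc: "vector_space (sc :: 'a::field \<Rightarrow> (nat \<Rightarrow> 'a) \<Rightarrow> _)"
  by unfold_locales (auto simp: sc_def algebra_simps fun_eq_iff)

definition closed_code :: "(nat \<Rightarrow> 'a::field) set \<Rightarrow> bool" where
  "closed_code C \<longleftrightarrow> (\<lambda>_. 0) \<in> C \<and> (\<forall>x\<in>C. \<forall>y\<in>C. (\<lambda>j. x j + y j) \<in> C) \<and> (\<forall>a. \<forall>x\<in>C. (\<lambda>j. a * x j) \<in> C)"

lemma code_dim_bij:
  fixes C :: "(nat \<Rightarrow> 'a::field) set"
  assumes cl: "closed_code C" and finU: "finite U"
    and bij: "bij_betw (\<lambda>x. restrict x U) C (U \<rightarrow>\<^sub>E UNIV)"
  shows "code_dim C = card U"
proof -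
  interpret V: vector_space "sc :: 'a \<Rightarrow> (nat \<Rightarrow> 'a) \<Rightarrow> _" by (rule vs_sc)
  have subC: "V.subspace C" using cl unfolding closed_code_def V.subspace_def sc_def
    by (auto simp: zero_fun_def plus_fun_def)
  define \<delta> where "\<delta> u = (\<lambda>j\<in>U. if j = u then (1::'a) else 0)" for u
  define b where "b u = inv_into C (\<lambda>x. restrict x U) (\<delta> u)" for u
  have \<delta>P: "\<delta> u \<in> U \<rightarrow>\<^sub>E UNIV" for u unfolding \<delta>_def by auto
  have im: "\<delta> u \<in> (\<lambda>x. restrict x U) ` C" for u using bij \<delta>P unfolding bij_betw_def by auto
  have bC: "b u \<in> C" for u unfolding b_def by (rule inv_into_into[OF im])
  have bres: "restrict (b u) U = \<delta> u" for u
    using f_inv_into_f[OF im[of u]] unfolding b_def by simp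
  have bval: "b u j = (if j = u then 1 else 0)" if "j \<in> U" for u j
    using fun_cong[OF bres[of u], of j] that unfolding \<delta>_def by auto
  have injb: "inj_on b U"
  proof (rule inj_onI)
    fix u u' assume "u \<in> U" "u' \<in> U" "b u = b u'"
    then have "b u u = b u' u" by simp
    then show "u = u'" using bval \<open>u \<in> U\<close> by (auto split: if_splits)
  qed
  define B where "B = b ` U"
  have indep: "V.independent B"
  proof -
    have "u0 = 0" if t: "finite t" "t \<subseteq> B" and s: "(\<Sum>v\<in>t. sc (c v) v) = 0" and v0: "v0 \<in> t" and "u0 = c v0" for t c v0 u0
    proof -
      obtain w where w: "w \<in> U" "v0 = b w" using v0 t unfolding B_def by auto
      have "0 = (\<Sum>v\<in>t. sc (c v) v) w" using s by simp
      also have "\<dots> = (\<Sum>v\<in>t. c v * v w)" by (simp add: sum_fun_app sc_def)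
      also have "\<dots> = (\<Sum>v\<in>t. if v = v0 then c v0 else 0)"
      proof (rule sum.cong)
        fix v assume "v \<in> t"
        then obtain u where u: "u \<in> U" "v = b u" using t unfolding B_def by auto
        show "c v * v w = (if v = v0 then c v0 else 0)"
          using u w bval[OF w(1)] injb by (auto simp: inj_on_def)
      qed simp
      also have "\<dots> = c v0" using v0 t by simp
      finally show ?thesis using that by simp
    qed
    then show ?thesis unfolding V.dependent_explicit by blast
  qed
  have spanB: "V.span B = C"
  proof
    show "V.span B \<subseteq> C" by (rule V.span_minimal[OF _ subC]) (use bC in \<open>auto simp: B_def\<close>)
    show "C \<subseteq> V.span B"
    proof
      fix x assume xC: "x \<in> C"
      define y where "y = (\<Sum>u\<in>U. sc (x u) (b u))"
      have yS: "y \<in> V.span B" unfolding y_def B_def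
        by (intro V.span_sum V.span_scale V.span_base) auto
      then have yC: "y \<in> C" using \<open>V.span B \<subseteq> C\<close> by auto
      have "restrict y U = restrict x U"
      proof
        fix j show "restrict y U j = restrict x U j"
        proof (cases "j \<in> U")
          case True
          have "y j = (\<Sum>u\<in>U. x u * b u j)" unfolding y_def by (simp add: sum_fun_app sc_def)
          also have "\<dots> = (\<Sum>u\<in>U. if u = j then x j else 0)"
            by (rule sum.cong) (auto simp: bval[OF True])
          also have "\<dots> = x j" using True finU by simp
          finally show ?thesis using True by simp
        qed simp
      qed
      then have "y = x" using bij yC xC unfolding bij_betw_def inj_on_def by blast
      then show "x \<in> V.span B" using yS by simp
    qed
  qed
  have "V.dim C = card B"
  proof (rule V.dim_eq_card[OF _ indep])
    have sC: "V.span C = C" by (rule V.span_subspace[OF order_refl V.span_superset subC])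
    show "V.span B = V.span C" by (simp only: spanB sC)
  qed
  also have "card B = card U" unfolding B_def using card_image[OF injb] .
  finally show ?thesis unfolding code_dim_def .
qed

lemma MDS_lemma:
  fixes C :: "(nat \<Rightarrow> 'a::field) set"
  assumes cl: "closed_code C" and finS: "finite S" and K1: "1 \<le> K" and KS: "K \<le> card S"
    and bij: "\<And>U. U \<subseteq> S \<Longrightarrow> card U = K \<Longrightarrow> bij_betw (\<lambda>x. restrict x U) C (U \<rightarrow>\<^sub>E UNIV)"
  shows "is_MDS_on S K C"
proof -
  obtain U where U: "U \<subseteq> S" "card U = K" using obtain_subset_with_card_n[OF KS] by auto
  have finU: "finite U" using U finS finite_subset by auto
  have dim: "code_dim C = K" using code_dim_bij[OF cl finU bij[OF U]] U by simp
  define M where "M = card S - K + 1"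
  define D where "D = {hdist S x y | x y. x \<in> C \<and> y \<in> C \<and> x \<noteq> y}"
  have lower: "M \<le> hdist S x y" if xy: "x \<in> C" "y \<in> C" "x \<noteq> y" for x y
  proof -
    define Z where "Z = {j \<in> S. x j = y j}"
    have "card Z < K"
    proof (rule ccontr)
      assume "\<not> card Z < K"
      then obtain W where W: "W \<subseteq> Z" "card W = K" using obtain_subset_with_card_n[of K Z] by auto
      have WS: "W \<subseteq> S" using W unfolding Z_def by auto
      have "restrict x W = restrict y W" unfolding restrict_def
        by (rule ext) (use W in \<open>auto simp: Z_def\<close>)
      then have "x = y" using bij[OF WS W(2)] xy unfolding bij_betw_def inj_on_def by blast
      with xy show False by simp
    qed
    have "{j \<in> S. x j \<noteq> y j} = S - Z" unfolding Z_def by auto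
    then have "hdist S x y = card S - card Z" unfolding hdist_def
      using finS by (simp add: card_Diff_subset Z_def finite_subset)
    then show ?thesis using \<open>card Z < K\<close> K1 KS unfolding M_def by linarith
  qed
  have MD: "M \<in> D"
  proof -
    obtain u where u: "u \<in> U" using U K1 by fastforce
    define z1 where "z1 = (\<lambda>j\<in>U. if j = u then (1::'a) else 0)"
    define z0 where "z0 = (\<lambda>j\<in>U. (0::'a))"
    have "z1 \<in> (\<lambda>x. restrict x U) ` C" "z0 \<in> (\<lambda>x. restrict x U) ` C"
      using bij[OF U] unfolding bij_betw_def z1_def z0_def by auto
    then obtain x y where x: "x \<in> C" "restrict x U = z1" and y: "y \<in> C" "restrict y U = z0" by auto
    have xu: "x u = 1" using fun_cong[OF x(2), of u] u unfolding z1_def by simp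
    have yu: "y u = 0" using fun_cong[OF y(2), of u] u unfolding z0_def by simp
    have xy: "x \<noteq> y" using xu yu by auto
    have eqU: "x j = y j" if "j \<in> U - {u}" for j
      using fun_cong[OF x(2), of j] fun_cong[OF y(2), of j] that unfolding z1_def z0_def by auto
    have "{j \<in> S. x j \<noteq> y j} \<subseteq> S - (U - {u})" using eqU by auto
    then have "hdist S x y \<le> card (S - (U - {u}))" unfolding hdist_def
      by (intro card_mono) (use finS in auto)
    also have "\<dots> = card S - (K - 1)" using U u finU
      by (subst card_Diff_subset) auto
    finally have "hdist S x y \<le> M" using K1 KS unfolding M_def by linarith
    with lower[OF x(1) y(1) xy] have "hdist S x y = M" by simp
    then show ?thesis unfolding D_def using x(1) y(1) xy by blast
  qed
  have "min_dist S C = M" unfolding min_dist_def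
    by (rule cInf_eq_minimum) (use MD lower in \<open>auto simp: D_def\<close>)
  then show ?thesis unfolding is_MDS_on_def using dim M_def by simp
qed

definition rv :: "nat \<Rightarrow> nat \<Rightarrow> (nat \<Rightarrow> nat \<Rightarrow> 'a::field) \<Rightarrow> (nat \<Rightarrow> 'a) \<Rightarrow> nat \<Rightarrow> 'a" where
  "rv k N G c = (\<lambda>j. if j < N then (\<Sum>w<k. c w * G w j) else 0)"

definition good :: "nat \<Rightarrow> (nat \<Rightarrow> nat \<Rightarrow> 'a::field) \<Rightarrow> nat set \<Rightarrow> bool" where
  "good k G T \<longleftrightarrow> (\<forall>c. (\<forall>j\<in>T. (\<Sum>w<k. c w * G w j) = 0) \<longrightarrow> (\<forall>w<k. c w = 0))"

lemma row_space_rv: "row_space k N G = range (rv k N G)"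
  unfolding row_space_def rv_def by auto

lemma rc_mem: "x \<in> restrict_code S (row_space k N G) \<longleftrightarrow> (\<exists>c. x = (\<lambda>j. if j \<in> S then rv k N G c j else 0))"
  unfolding restrict_code_def row_space_rv by auto

lemma closed_rc: "closed_code (restrict_code S (row_space k N (G :: nat \<Rightarrow> nat \<Rightarrow> 'a::field)))"
  unfolding closed_code_def
proof (intro conjI ballI allI)
  show "(\<lambda>_. 0::'a) \<in> restrict_code S (row_space k N G)" unfolding rc_mem
    by (rule exI[of _ "\<lambda>_. 0"]) (auto simp: rv_def)
next
  fix x y assume "x \<in> restrict_code S (row_space k N G)" "y \<in> restrict_code S (row_space k N G)"
  then obtain c c' where "x = (\<lambda>j. if j \<in> S then rv k N G c j else 0)" "y = (\<lambda>j. if j \<in> S then rv k N G c' j else 0)"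
    unfolding rc_mem by auto
  then show "(\<lambda>j. x j + y j) \<in> restrict_code S (row_space k N G)" unfolding rc_mem
    by (intro exI[of _ "\<lambda>w. c w + c' w"]) (simp add: rv_def fun_eq_iff sum.distrib distrib_right)
next
  fix a x assume "x \<in> restrict_code S (row_space k N G)"
  then obtain c where "x = (\<lambda>j. if j \<in> S then rv k N G c j else 0)" unfolding rc_mem by auto
  then show "(\<lambda>j. a * x j) \<in> restrict_code S (row_space k N G)" unfolding rc_mem
    by (intro exI[of _ "\<lambda>w. a * c w"]) (simp add: rv_def fun_eq_iff sum_distrib_left mult.assoc)
qed

lemma rc_univ: "restrict_code {0..<N} (row_space k N G) = row_space k N G"
proof
  show "restrict_code {0..<N} (row_space k N G) \<subseteq> row_space k N G"
    unfolding restrict_code_def row_space_def by (auto simp: fun_eq_iff)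
  show "row_space k N G \<subseteq> restrict_code {0..<N} (row_space k N G)"
  proof
    fix x assume x: "x \<in> row_space k N G"
    then have "x = (\<lambda>j. if j \<in> {0..<N} then x j else 0)" unfolding row_space_def by (auto simp: fun_eq_iff)
    then show "x \<in> restrict_code {0..<N} (row_space k N G)" unfolding restrict_code_def using x by blast
  qed
qed

lemma good_diff:
  assumes g: "good k G T" and eq: "\<forall>j\<in>T. (\<Sum>w<k. c w * G w j) = (\<Sum>w<k. c' w * G w j)"
  shows "\<forall>w<k. c w = c' w"
proof -
  have "\<forall>j\<in>T. (\<Sum>w<k. (c w - c' w) * G w j) = 0"
    using eq by (simp add: left_diff_distrib sum_subtractf)
  then have "\<forall>w<k. c w - c' w = 0" using g unfolding good_def by (drule_tac spec[where x="\<lambda>w. c w - c' w"]) simp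
  then show ?thesis by simp
qed

lemma good_surj:
  fixes G :: "nat \<Rightarrow> nat \<Rightarrow> 'a::{finite,field}"
  assumes g: "good k G T" and finT: "finite T" and cT: "card T = k" and UT: "U \<subseteq> T" and US: "U \<subseteq> S"
    and TN: "T \<subseteq> {0..<N}"
  shows "(\<lambda>x. restrict x U) ` restrict_code S (row_space k N G) = U \<rightarrow>\<^sub>E UNIV"
proof
  show "(\<lambda>x. restrict x U) ` restrict_code S (row_space k N G) \<subseteq> U \<rightarrow>\<^sub>E UNIV" by (rule image_subsetI) simp
  define \<Phi> where "\<Phi> c = (\<lambda>j\<in>T. \<Sum>w<k. c w * G w j)" for c
  let ?A = "{0..<k} \<rightarrow>\<^sub>E (UNIV::'a set)"
  have inj: "inj_on \<Phi> ?A"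
  proof (rule inj_onI)
    fix c c' assume c: "c \<in> ?A" "c' \<in> ?A" "\<Phi> c = \<Phi> c'"
    have "\<forall>j\<in>T. (\<Sum>w<k. c w * G w j) = (\<Sum>w<k. c' w * G w j)"
    proof
      fix j assume j: "j \<in> T"
      show "(\<Sum>w<k. c w * G w j) = (\<Sum>w<k. c' w * G w j)"
        using fun_cong[OF c(3), of j] j unfolding \<Phi>_def by simp
    qed
    then have cc: "\<forall>w<k. c w = c' w" by (rule good_diff[OF g])
    show "c = c'" by (rule PiE_ext[OF c(1) c(2)]) (use cc in simp)
  qed
  have sub: "\<Phi> ` ?A \<subseteq> T \<rightarrow>\<^sub>E UNIV" unfolding \<Phi>_def by auto
  have finP: "finite (T \<rightarrow>\<^sub>E (UNIV::'a set))" by (rule finite_PiE[OF finT]) simp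
  have "card (\<Phi> ` ?A) = card ?A" by (rule card_image[OF inj])
  also have "\<dots> = card (T \<rightarrow>\<^sub>E (UNIV::'a set))" using finT cT by (simp add: card_PiE)
  finally have surj: "\<Phi> ` ?A = T \<rightarrow>\<^sub>E UNIV"
    by (intro card_subset_eq[OF finP sub])
  show "U \<rightarrow>\<^sub>E UNIV \<subseteq> (\<lambda>x. restrict x U) ` restrict_code S (row_space k N G)"
  proof
    fix z assume z: "z \<in> U \<rightarrow>\<^sub>E (UNIV::'a set)"
    define z' where "z' = (\<lambda>j\<in>T. if j \<in> U then z j else 0)"
    have "z' \<in> T \<rightarrow>\<^sub>E UNIV" unfolding z'_def by simp
    then have "z' \<in> \<Phi> ` ?A" unfolding surj .
    then obtain c where c: "c \<in> ?A" "\<Phi> c = z'" by (metis imageE)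
    define x where "x = (\<lambda>j. if j \<in> S then rv k N G c j else 0)"
    have xC: "x \<in> restrict_code S (row_space k N G)" unfolding rc_mem x_def by blast
    have "restrict x U = z"
    proof
      fix j show "restrict x U j = z j"
      proof (cases "j \<in> U")
        case True
        then have "j \<in> S" "j \<in> T" "j < N" using US UT TN by auto
        then have "x j = \<Phi> c j" unfolding x_def rv_def \<Phi>_def by simp
        then show ?thesis using c(2) True \<open>j \<in> T\<close> unfolding z'_def by simp
      next
        case False then show ?thesis using z by (simp add: PiE_def extensional_def)
      qed
    qed
    then show "z \<in> (\<lambda>x. restrict x U) ` restrict_code S (row_space k N G)" by (intro image_eqI[OF _ xC]) simp
  qed
qed

lemma good_inj:
  assumes g: "good k G T" and TS: "T \<subseteq> S" and TN: "T \<subseteq> {0..<N}"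
  shows "inj_on (\<lambda>x. restrict x T) (restrict_code S (row_space k N G))"
proof (rule inj_onI)
  fix x y assume "x \<in> restrict_code S (row_space k N G)" "y \<in> restrict_code S (row_space k N G)"
    and eq: "restrict x T = restrict y T"
  then obtain c c' where x: "x = (\<lambda>j. if j \<in> S then rv k N G c j else 0)"
    and y: "y = (\<lambda>j. if j \<in> S then rv k N G c' j else 0)" unfolding rc_mem by auto
  have "\<forall>j\<in>T. (\<Sum>w<k. c w * G w j) = (\<Sum>w<k. c' w * G w j)"
  proof
    fix j assume j: "j \<in> T"
    have "x j = y j" using fun_cong[OF eq, of j] j by simp
    moreover have "j \<in> S" "j < N" using j TS TN by auto
    ultimately show "(\<Sum>w<k. c w * G w j) = (\<Sum>w<k. c' w * G w j)"
      unfolding x y rv_def by simp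
  qed
  then have "\<forall>w<k. c w = c' w" by (rule good_diff[OF g])
  then have rvq: "rv k N G c j = rv k N G c' j" for j unfolding rv_def by auto
  show "x = y" unfolding x y by (rule ext) (simp only: rvq)
qed

lemma good_bij:
  fixes G :: "nat \<Rightarrow> nat \<Rightarrow> 'a::{finite,field}"
  assumes g: "good k G T" and finT: "finite T" and cT: "card T = k" and TS: "T \<subseteq> S"
    and TN: "T \<subseteq> {0..<N}"
  shows "bij_betw (\<lambda>x. restrict x T) (restrict_code S (row_space k N G)) (T \<rightarrow>\<^sub>E UNIV)"
  unfolding bij_betw_def using good_inj[OF g TS TN] good_surj[OF g finT cT order_refl TS TN] by simp

lemma off_Suc: "blk_off l r (Suc i) = blk_off l r i + l + r i"
  by (simp add: blk_off_def)

lemma off_mono: "i \<le> j \<Longrightarrow> blk_off l r i \<le> blk_off l r j"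
  unfolding blk_off_def by (rule sum_mono2) auto

lemma blk_alt: "blk l r i = {blk_off l r i ..< blk_off l r (Suc i)}"
  by (simp add: blk_def off_Suc)

lemma blk_disj: "i \<noteq> j \<Longrightarrow> blk l r i \<inter> blk l r j = {}"
proof (cases "i < j")
  case True
  then have "blk_off l r (Suc i) \<le> blk_off l r j" by (intro off_mono) simp
  then show ?thesis unfolding blk_alt by auto
next
  case False
  assume "i \<noteq> j"
  with False have "blk_off l r (Suc j) \<le> blk_off l r i" by (intro off_mono) simp
  then show ?thesis unfolding blk_alt by auto
qed

lemma blk_cover: "c < blk_off l r m \<Longrightarrow> \<exists>i<m. c \<in> blk l r i"
proof (induction m)
  case 0 then show ?case by (simp add: blk_off_def)
next
  case (Suc m)
  show ?case
  proof (cases "c < blk_off l r m")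
    case True then obtain i where "i < m" "c \<in> blk l r i" using Suc.IH by blast
    then show ?thesis by (intro exI[of _ i]) simp
  next
    case False then have "c \<in> blk l r m" using Suc.prems unfolding blk_alt by auto
    then show ?thesis by blast
  qed
qed

lemma blk_sub: "i < m \<Longrightarrow> blk l r i \<subseteq> {0..<blk_off l r m}"
  using off_mono[of "Suc i" m l r] unfolding blk_alt by auto

lemma the_blk: "i < m \<Longrightarrow> c \<in> blk l r i \<Longrightarrow> (THE i'. i' < m \<and> c \<in> blk l r i') = i"
proof (rule the_equality)
  assume "i < m" "c \<in> blk l r i"
  then show "i < m \<and> c \<in> blk l r i" by simp
  fix i' assume "i' < m \<and> c \<in> blk l r i'"
  then show "i' = i" using blk_disj[of i' i l r] \<open>c \<in> blk l r i\<close> by blast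
qed

lemma genmat_blk:
  assumes "i < m" "p < l + r i"
  shows "genmat k l m r \<alpha> \<beta> w (blk_off l r i + p) =
    (if p < l then Cmat k \<alpha> w (i*l+p) else (\<Sum>t<l. \<beta> (t,i,p-l) * Cmat k \<alpha> w (i*l+t)))"
proof -
  have c: "blk_off l r i + p \<in> blk l r i" using assms unfolding blk_def by auto
  have ex: "\<exists>i'<m. blk_off l r i + p \<in> blk l r i'" using c assms(1) by blast
  show ?thesis unfolding genmat_def Let_def the_blk[OF assms(1) c] using ex by simp
qed

definition cc :: "nat \<Rightarrow> (nat \<Rightarrow> nat) \<Rightarrow> nat \<times> nat \<Rightarrow> nat" where
  "cc l r ip = blk_off l r (fst ip) + snd ip"

lemma cc_blk: "p < l \<Longrightarrow> cc l r (i,p) \<in> blk l r i"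
  unfolding cc_def blk_def by auto

lemma cc_blk_iff: "p < l \<Longrightarrow> cc l r (i',p) \<in> blk l r i \<longleftrightarrow> i' = i"
  using cc_blk[of p l r i'] blk_disj[of i' i l r] by auto

lemma cc_inj: "inj_on (cc l r) (A \<times> {0..<l})"
proof (rule inj_onI, clarify)
  fix i p i' p' assume "p \<in> {0..<l}" "p' \<in> {0..<l}" "i \<in> A" "i' \<in> A" and eq: "cc l r (i,p) = cc l r (i',p')"
  then have "cc l r (i,p) \<in> blk l r i'" using cc_blk[of p' l r i'] by simp
  then have "i = i'" using cc_blk_iff \<open>p \<in> {0..<l}\<close> by auto
  then show "i = i' \<and> p = p'" using eq unfolding cc_def by simp
qed

lemma card_cc: "finite A \<Longrightarrow> card (cc l r ` (A \<times> {0..<l})) = card A * l"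
  using card_image[OF cc_inj] by (simp add: card_cartesian_product)

lemma cc_part:
  assumes "X \<subseteq> cc l r ` (A \<times> {0..<l})"
  shows "card (X \<inter> blk l r i) \<le> l"
proof -
  have "X \<inter> blk l r i \<subseteq> (\<lambda>p. cc l r (i,p)) ` {0..<l}"
  proof
    fix x assume x: "x \<in> X \<inter> blk l r i"
    then obtain i' p where "x = cc l r (i',p)" "p < l" using assms by auto
    then show "x \<in> (\<lambda>p. cc l r (i,p)) ` {0..<l}" using x cc_blk_iff by auto
  qed
  then have "card (X \<inter> blk l r i) \<le> card ((\<lambda>p. cc l r (i,p)) ` {0..<l})" by (intro card_mono) auto
  also have "\<dots> \<le> l" using card_image_le[of "{0..<l}" "\<lambda>p. cc l r (i,p)"] by simp
  finally show ?thesis .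
qed

lemma cc_sub: "A \<subseteq> {0..<m} \<Longrightarrow> cc l r ` (A \<times> {0..<l}) \<subseteq> {0..<blk_off l r m}"
proof (rule image_subsetI, clarify)
  fix i p assume "A \<subseteq> {0..<m}" "i \<in> A" "p \<in> {0..<l}"
  then have "i < m" "p < l" by auto
  then show "cc l r (i,p) \<in> {0..<blk_off l r m}" using subsetD[OF blk_sub[of i m l r] cc_blk[of p l r i]] by simp
qed

definition adm :: "nat \<Rightarrow> nat \<Rightarrow> nat \<Rightarrow> (nat \<Rightarrow> nat) \<Rightarrow> nat set \<Rightarrow> bool" where
  "adm k l m r T \<longleftrightarrow> T \<subseteq> {0..<blk_off l r m} \<and> card T = k \<and> (\<forall>i<m. card (T \<inter> blk l r i) \<le> l)"

lemma local_bij: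
  fixes \<alpha> :: "nat \<times> nat \<Rightarrow> 'a::{finite,field}" and \<beta> :: "nat \<times> nat \<times> nat \<Rightarrow> 'a"
    and k l m i :: nat and r :: "nat \<Rightarrow> nat" and U :: "nat set"
  defines "N \<equiv> blk_off l r m" and "G \<equiv> genmat k l m r \<alpha> \<beta>"
  assumes kl: "l \<le> k" and kml: "k \<le> m * l"
    and allgood: "\<And>T. adm k l m r T \<Longrightarrow> good k G T"
    and i: "i < m" and UB: "U \<subseteq> blk l r i" and cU: "card U = l"
  shows "bij_betw (\<lambda>x. restrict x U) (restrict_code (blk l r i) (row_space k N G)) (U \<rightarrow>\<^sub>E UNIV)"
proof -
  let ?C = "restrict_code (blk l r i) (row_space k N G)"
  let ?W0 = "cc l r ` (({0..<m} - {i}) \<times> {0..<l})"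
  have cW0: "card ?W0 = (m - 1) * l" using card_cc[of "{0..<m} - {i}" l r] i by simp
  have "k - l \<le> card ?W0" using cW0 kml by (simp add: diff_mult_distrib)
  then obtain W where W: "W \<subseteq> ?W0" "card W = k - l" using obtain_subset_with_card_n by metis
  have finU: "finite U" using UB finite_subset unfolding blk_def by blast
  have finW: "finite W" using W(1) finite_subset by blast
  have WB: "W \<inter> blk l r i = {}"
  proof (rule ccontr)
    assume "W \<inter> blk l r i \<noteq> {}"
    then obtain x where x: "x \<in> W" "x \<in> blk l r i" by blast
    then have "x \<in> cc l r ` (({0..<m} - {i}) \<times> {0..<l})" using W(1) by blast
    then obtain ip where "ip \<in> ({0..<m} - {i}) \<times> {0..<l}" "x = cc l r ip" by (rule imageE)
    then obtain i' p where ip: "x = cc l r (i',p)" "i' \<noteq> i" "p < l" by (cases ip) auto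
    then show False using x(2) cc_blk_iff[of p l r i' i] by simp
  qed
  have UW: "U \<inter> W = {}" using WB UB by blast
  define T where "T = U \<union> W"
  have finT: "finite T" using finU finW unfolding T_def by simp
  have cT: "card T = k" unfolding T_def using card_Un_disjoint[OF finU finW UW] cU W(2) kl by simp
  have TN: "T \<subseteq> {0..<N}" unfolding T_def N_def
  proof -
    have "U \<subseteq> {0..<blk_off l r m}" using subset_trans[OF UB blk_sub[OF i]] .
    moreover have "W \<subseteq> {0..<blk_off l r m}" using subset_trans[OF W(1) cc_sub[of "{0..<m} - {i}" m l r]] by blast
    ultimately show "U \<union> W \<subseteq> {0..<blk_off l r m}" by blast
  qed
  have "adm k l m r T" unfolding adm_def
  proof (intro conjI allI impI)
    show "T \<subseteq> {0..<blk_off l r m}" using TN unfolding N_def .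
    show "card T = k" by (rule cT)
    fix i' assume "i' < m"
    show "card (T \<inter> blk l r i') \<le> l"
    proof (cases "i' = i")
      case True
      then have "T \<inter> blk l r i' = U" unfolding T_def using UB WB by blast
      then show ?thesis using cU by simp
    next
      case False
      then have "T \<inter> blk l r i' = W \<inter> blk l r i'" unfolding T_def using UB blk_disj[of i i' l r] by blast
      then show ?thesis using cc_part[OF W(1)] by simp
    qed
  qed
  then have gT: "good k G T" by (rule allgood)
  have surj: "(\<lambda>x. restrict x U) ` ?C = U \<rightarrow>\<^sub>E UNIV"
    by (rule good_surj[OF gT finT cT _ UB TN]) (simp add: T_def)
  \<comment> \<open>injectivity via the C_i-coordinates\<close>
  define yc where "yc c = (\<lambda>t\<in>{0..<l}. \<Sum>w<k. c w * Cmat k \<alpha> w (i*l+t))" for c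
  define bv where "bv y p = (if p < l then y p else (\<Sum>t<l. \<beta> (t,i,p-l) * y t))" for y :: "nat \<Rightarrow> 'a" and p
  have key: "rv k N G c (blk_off l r i + p) = bv (yc c) p" if p: "p < l + r i" for c p
  proof -
    have "blk_off l r i + p \<in> blk l r i" using p unfolding blk_def by simp
    from subsetD[OF blk_sub[OF i] this] have lt: "blk_off l r i + p < N" unfolding N_def by simp
    show ?thesis
    proof (cases "p < l")
      case True
      then show ?thesis unfolding rv_def G_def bv_def yc_def using lt genmat_blk[of i m p l r k \<alpha> \<beta>, OF i p] by simp
    next
      case False
      have "rv k N G c (blk_off l r i + p) = (\<Sum>w<k. c w * (\<Sum>t<l. \<beta> (t,i,p-l) * Cmat k \<alpha> w (i*l+t)))"
        unfolding rv_def G_def using lt genmat_blk[of i m p l r k \<alpha> \<beta>, OF i p] False by simp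
      also have "\<dots> = (\<Sum>w<k. \<Sum>t<l. \<beta> (t,i,p-l) * (c w * Cmat k \<alpha> w (i*l+t)))"
        by (simp add: sum_distrib_left mult.left_commute)
      also have "\<dots> = (\<Sum>t<l. \<Sum>w<k. \<beta> (t,i,p-l) * (c w * Cmat k \<alpha> w (i*l+t)))"
        by (rule sum.swap)
      also have "\<dots> = (\<Sum>t<l. \<beta> (t,i,p-l) * (\<Sum>w<k. c w * Cmat k \<alpha> w (i*l+t)))"
        by (simp add: sum_distrib_left)
      also have "\<dots> = bv (yc c) p" unfolding bv_def yc_def using False by simp
      finally show ?thesis .
    qed
  qed
  define \<Psi> where "\<Psi> y = (\<lambda>j\<in>U. bv y (j - blk_off l r i))" for y
  have psi: "\<Psi> (yc c) = restrict (\<lambda>j. if j \<in> blk l r i then rv k N G c j else 0) U" for c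
  proof
    fix j show "\<Psi> (yc c) j = restrict (\<lambda>j. if j \<in> blk l r i then rv k N G c j else 0) U j"
    proof (cases "j \<in> U")
      case True
      then have jb: "j \<in> blk l r i" using UB by auto
      define p where "p = j - blk_off l r i"
      have "j = blk_off l r i + p" "p < l + r i" using jb unfolding blk_def p_def by auto
      then show ?thesis using key True jb unfolding \<Psi>_def by simp
    qed (simp add: \<Psi>_def)
  qed
  let ?Y = "{0..<l} \<rightarrow>\<^sub>E (UNIV::'a set)"
  have ycY: "yc c \<in> ?Y" for c unfolding yc_def by simp
  have PsiY: "\<Psi> ` ?Y = U \<rightarrow>\<^sub>E UNIV"
  proof
    show "\<Psi> ` ?Y \<subseteq> U \<rightarrow>\<^sub>E UNIV" unfolding \<Psi>_def by (rule image_subsetI) simp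
    show "U \<rightarrow>\<^sub>E UNIV \<subseteq> \<Psi> ` ?Y"
    proof
      fix z assume "z \<in> U \<rightarrow>\<^sub>E (UNIV::'a set)"
      then have "z \<in> (\<lambda>x. restrict x U) ` ?C" using surj by simp
      then obtain x where x: "x \<in> ?C" "z = restrict x U" by (metis imageE)
      then obtain c where "x = (\<lambda>j. if j \<in> blk l r i then rv k N G c j else 0)" unfolding rc_mem by blast
      then have "z = \<Psi> (yc c)" using x psi by simp
      then show "z \<in> \<Psi> ` ?Y" using ycY by blast
    qed
  qed
  have finY: "finite ?Y" by (rule finite_PiE) auto
  have "card (\<Psi> ` ?Y) = card ?Y" unfolding PsiY using finU cU by (simp add: card_PiE)
  then have injPsi: "inj_on \<Psi> ?Y" by (rule eq_card_imp_inj_on[OF finY])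
  have inj: "inj_on (\<lambda>x. restrict x U) ?C"
  proof (rule inj_onI)
    fix x x' assume "x \<in> ?C" "x' \<in> ?C" and eq: "restrict x U = restrict x' U"
    then obtain c c' where x: "x = (\<lambda>j. if j \<in> blk l r i then rv k N G c j else 0)"
      and x': "x' = (\<lambda>j. if j \<in> blk l r i then rv k N G c' j else 0)" unfolding rc_mem by blast
    have "\<Psi> (yc c) = \<Psi> (yc c')" using eq psi x x' by simp
    then have yeq: "yc c = yc c'" using injPsi ycY by (meson inj_onD)
    show "x = x'"
    proof
      fix j show "x j = x' j"
      proof (cases "j \<in> blk l r i")
        case True
        define p where "p = j - blk_off l r i"
        have "j = blk_off l r i + p" "p < l + r i" using True unfolding blk_def p_def by auto
        then show ?thesis using key yeq True unfolding x x' by simp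
      qed (simp add: x x')
    qed
  qed
  show ?thesis unfolding bij_betw_def using inj surj by simp
qed


lemma blk_off_m: "blk_off l r m = m * l + (\<Sum>i<m. r i)"
  by (simp add: blk_off_def sum.distrib)

lemma card_blk: "card (blk l r i) = l + r i" by (simp add: blk_def)

lemma PMDS_of_good:
  fixes \<alpha> :: "nat \<times> nat \<Rightarrow> 'a::{finite,field}" and \<beta> :: "nat \<times> nat \<times> nat \<Rightarrow> 'a"
    and k l m :: nat and r :: "nat \<Rightarrow> nat"
  assumes kl: "l \<le> k" and l1: "1 \<le> l" and kml: "k < m * l"
    and allgood: "\<And>T. adm k l m r T \<Longrightarrow> good k (genmat k l m r \<alpha> \<beta>) T"
  shows "is_PMDS k l m r (row_space k (\<Sum>i<m. l + r i) (genmat k l m r \<alpha> \<beta>))"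
proof -
  have Ndef: "(\<Sum>i<m. l + r i) = blk_off l r m" by (simp add: blk_off_def)
  define N where "N = blk_off l r m"
  define G where "G = genmat k l m r \<alpha> \<beta>"
  let ?C = "row_space k N G"
  have allgood': "\<And>T. adm k l m r T \<Longrightarrow> good k G T" unfolding G_def by (rule allgood)
  have k1: "1 \<le> k" using kl l1 by simp
  let ?CC = "cc l r ` ({0..<m} \<times> {0..<l})"
  have "card ?CC = m * l" using card_cc[of "{0..<m}" l r] by simp
  then obtain T0 where T0: "T0 \<subseteq> ?CC" "card T0 = k" using obtain_subset_with_card_n[of k ?CC] kml by auto
  have T0N: "T0 \<subseteq> {0..<N}" using subset_trans[OF T0(1) cc_sub[of "{0..<m}" m l r]] unfolding N_def by simp
  have finT0: "finite T0" using T0N finite_subset by blast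
  have "adm k l m r T0" unfolding adm_def using T0N T0(2) cc_part[OF T0(1)] unfolding N_def by simp
  then have g0: "good k G T0" by (rule allgood')
  have bij0: "bij_betw (\<lambda>x. restrict x T0) ?C (T0 \<rightarrow>\<^sub>E UNIV)"
    using good_bij[OF g0 finT0 T0(2) T0N T0N] unfolding rc_univ .
  have clC: "closed_code ?C" using closed_rc[of "{0..<N}" k N G] unfolding rc_univ .
  have dim: "code_dim ?C = k" using code_dim_bij[OF clC finT0 bij0] T0(2) by simp
  have kN: "k < N" unfolding N_def blk_off_m using kml by simp
  have loc: "is_MDS_on (blk l r i) l (restrict_code (blk l r i) ?C)" if i: "i < m" for i
  proof (rule MDS_lemma[OF closed_rc])
    show "finite (blk l r i)" by (simp add: blk_def)
    show "1 \<le> l" by (rule l1)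
    show "l \<le> card (blk l r i)" by (simp add: card_blk)
    fix U assume "U \<subseteq> blk l r i" "card U = l"
    then show "bij_betw (\<lambda>x. restrict x U) (restrict_code (blk l r i) ?C) (U \<rightarrow>\<^sub>E UNIV)"
      unfolding N_def G_def using local_bij[OF kl _ allgood i] kml by simp
  qed
  have glob: "is_MDS_on ({0..<N} - (\<Union>i<m. E i)) k (restrict_code ({0..<N} - (\<Union>i<m. E i)) ?C)"
    if E: "\<forall>i<m. E i \<subseteq> blk l r i \<and> card (E i) = r i" for E
  proof -
    let ?S = "{0..<N} - (\<Union>i<m. E i)"
    have EN: "(\<Union>i<m. E i) \<subseteq> {0..<N}" using E blk_sub[of _ m l r] unfolding N_def by blast
    have finE: "finite (\<Union>i<m. E i)" using EN finite_subset by blast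
    have "card (\<Union>i<m. E i) \<le> (\<Sum>i<m. card (E i))" by (rule card_UN_le) simp
    also have "\<dots> = (\<Sum>i<m. r i)" using E by simp
    finally have cE: "card (\<Union>i<m. E i) \<le> (\<Sum>i<m. r i)" .
    have cS: "card ?S = N - card (\<Union>i<m. E i)" using EN by (simp add: card_Diff_subset finE)
    have kS: "k \<le> card ?S" using cS cE kml unfolding N_def blk_off_m by simp
    show ?thesis
    proof (rule MDS_lemma[OF closed_rc _ k1 kS])
      show "finite ?S" by simp
      fix U assume US: "U \<subseteq> ?S" and cU: "card U = k"
      have UN: "U \<subseteq> {0..<N}" using US by blast
      have finU: "finite U" using UN finite_subset by blast
      have "adm k l m r U" unfolding adm_def
      proof (intro conjI allI impI)
        show "U \<subseteq> {0..<blk_off l r m}" using UN unfolding N_def .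
        show "card U = k" by (rule cU)
        fix i assume i: "i < m"
        have "U \<inter> blk l r i \<subseteq> blk l r i - E i" using US i by blast
        then have "card (U \<inter> blk l r i) \<le> card (blk l r i - E i)" by (intro card_mono) (simp_all add: blk_def)
        also have "\<dots> = l" using E i by (simp add: card_Diff_subset finite_subset[of _ "blk l r i"] blk_def)
        finally show "card (U \<inter> blk l r i) \<le> l" .
      qed
      then have "good k G U" by (rule allgood')
      then show "bij_betw (\<lambda>x. restrict x U) (restrict_code ?S ?C) (U \<rightarrow>\<^sub>E UNIV)"
        by (rule good_bij[OF _ finU cU US UN])
    qed
  qed
  show ?thesis unfolding is_PMDS_def Let_def Ndef
    using dim kN loc glob unfolding N_def G_def by blast
qed

lemma divmod_uniq:
  fixes i i' q q' l :: nat
  assumes "q < l" "q' < l" "i*l+q = i'*l+q'"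
  shows "i = i' \<and> q = q'"
proof -
  have l0: "l > 0" using assms(1) by simp
  have "(i*l+q) div l = i" using assms(1) l0 by simp
  moreover have "(i'*l+q') div l = i'" using assms(2) l0 by simp
  ultimately have "i = i'" using assms(3) by simp
  then show ?thesis using assms(3) by simp
qed

lemma witness:
  fixes k l m :: nat and r :: "nat \<Rightarrow> nat" and T :: "nat set"
  assumes l1: "1 \<le> l" and kml: "k \<le> m*l" and adm: "adm k l m r T"
  shows "\<exists>\<alpha>0 \<beta>0. good k (genmat k l m r (\<alpha>0 :: nat\<times>nat \<Rightarrow> 'a::field) \<beta>0) T"
proof -
  have TN: "T \<subseteq> {0..<blk_off l r m}" and cT: "card T = k"
    and Tb: "\<forall>i<m. card (T \<inter> blk l r i) \<le> l" using adm unfolding adm_def by auto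
  define P where "P i = {p. p < l \<and> blk_off l r i + p \<in> T}" for i
  define Q where "Q i = {j. j < r i \<and> blk_off l r i + l + j \<in> T}" for i
  have PQ: "card (Q i) \<le> card ({0..<l} - P i)" if i: "i < m" for i
  proof -
    have eq: "T \<inter> blk l r i = (\<lambda>p. blk_off l r i + p) ` P i \<union> (\<lambda>j. blk_off l r i + l + j) ` Q i"
    proof
      show "T \<inter> blk l r i \<subseteq> (\<lambda>p. blk_off l r i + p) ` P i \<union> (\<lambda>j. blk_off l r i + l + j) ` Q i"
      proof
        fix x assume x: "x \<in> T \<inter> blk l r i"
        define p where "p = x - blk_off l r i"
        have xp: "x = blk_off l r i + p" "p < l + r i" using x unfolding blk_def p_def by auto
        show "x \<in> (\<lambda>p. blk_off l r i + p) ` P i \<union> (\<lambda>j. blk_off l r i + l + j) ` Q i"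
        proof (cases "p < l")
          case True then have "p \<in> P i" using x xp unfolding P_def by auto
          then show ?thesis using xp by blast
        next
          case False then have "p - l \<in> Q i" "x = blk_off l r i + l + (p - l)" using x xp unfolding Q_def by auto
          then show ?thesis by blast
        qed
      qed
      show "(\<lambda>p. blk_off l r i + p) ` P i \<union> (\<lambda>j. blk_off l r i + l + j) ` Q i \<subseteq> T \<inter> blk l r i"
        unfolding P_def Q_def blk_def by auto
    qed
    have finP: "finite (P i)" unfolding P_def by simp
    have finQ: "finite (Q i)" unfolding Q_def by simp
    have disj: "(\<lambda>p. blk_off l r i + p) ` P i \<inter> (\<lambda>j. blk_off l r i + l + j) ` Q i = {}"
      unfolding P_def Q_def by auto
    have "card (T \<inter> blk l r i) = card (P i) + card (Q i)"
      unfolding eq using card_Un_disjoint[OF _ _ disj] finP finQ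
      by (simp add: card_image inj_on_def)
    moreover have "card (T \<inter> blk l r i) \<le> l" using Tb i by blast
    ultimately have "card (P i) + card (Q i) \<le> l" by linarith
    moreover have "card ({0..<l} - P i) = l - card (P i)"
      by (subst card_Diff_subset) (auto simp: P_def)
    ultimately show ?thesis by simp
  qed
  have "\<forall>i\<in>{..<m}. \<exists>f. f ` Q i \<subseteq> {0..<l} - P i \<and> inj_on f (Q i)"
  proof
    fix i assume "i \<in> {..<m}"
    then show "\<exists>f. f ` Q i \<subseteq> {0..<l} - P i \<and> inj_on f (Q i)"
      using card_le_inj[of "Q i" "{0..<l} - P i"] PQ by (simp add: Q_def)
  qed
  then obtain \<tau> where \<tau>: "\<forall>i\<in>{..<m}. \<tau> i ` Q i \<subseteq> {0..<l} - P i \<and> inj_on (\<tau> i) (Q i)"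
    by (metis bchoice)
  define \<beta>0 where "\<beta>0 = (\<lambda>(t,i,j). if i < m \<and> j \<in> Q i \<and> t = \<tau> i j then (1::'a) else 0)"
  define Tp where "Tp = {(i,p). i < m \<and> p < l + r i \<and> blk_off l r i + p \<in> T}"
  define qq where "qq = (\<lambda>(i,p). if p < l then p else \<tau> i (p - l))"
  define \<mu> where "\<mu> = (\<lambda>(i,p). i*l + qq (i,p))"
  have qqQ: "p - l \<in> Q i" if "(i,p) \<in> Tp" "\<not> p < l" for i p
    using that unfolding Tp_def Q_def by auto
  have qql: "qq (i,p) < l" if "(i,p) \<in> Tp" for i p
  proof (cases "p < l")
    case False
    then have "\<tau> i (p - l) \<in> {0..<l} - P i" using qqQ[OF that False] \<tau> that unfolding Tp_def by blast
    then show ?thesis using False unfolding qq_def by simp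
  qed (simp add: qq_def)
  have Gmu: "genmat k l m r \<alpha> \<beta>0 w (blk_off l r i + p) = Cmat k \<alpha> w (\<mu> (i,p))" if ip: "(i,p) \<in> Tp" for \<alpha> w i p
  proof -
    have i: "i < m" and p: "p < l + r i" using ip unfolding Tp_def by auto
    show ?thesis
    proof (cases "p < l")
      case True then show ?thesis using genmat_blk[of i m p l r k \<alpha> \<beta>0 w, OF i p] unfolding \<mu>_def qq_def by simp
    next
      case False
      have jQ: "p - l \<in> Q i" by (rule qqQ[OF ip False])
      have tl: "\<tau> i (p - l) < l" using qql[OF ip] False unfolding qq_def by simp
      have "(\<Sum>t<l. \<beta>0 (t,i,p-l) * Cmat k \<alpha> w (i*l+t)) = (\<Sum>t<l. if t = \<tau> i (p - l) then Cmat k \<alpha> w (i*l+t) else 0)"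
        by (rule sum.cong) (auto simp: \<beta>0_def i jQ)
      also have "\<dots> = Cmat k \<alpha> w (i*l + \<tau> i (p - l))" using tl by simp
      finally show ?thesis using genmat_blk[of i m p l r k \<alpha> \<beta>0 w, OF i p] False unfolding \<mu>_def qq_def by simp
    qed
  qed
  have inj\<mu>: "inj_on \<mu> Tp"
  proof (rule inj_onI, clarify)
    fix i p i' p' assume ip: "(i,p) \<in> Tp" and ip': "(i',p') \<in> Tp" and eq: "\<mu> (i,p) = \<mu> (i',p')"
    from divmod_uniq[OF qql[OF ip] qql[OF ip']] eq have ii: "i = i'" and qeq: "qq (i,p) = qq (i',p')"
      unfolding \<mu>_def by auto
    have i: "i < m" using ip unfolding Tp_def by auto
    show "i = i' \<and> p = p'"
    proof (cases "p < l"; cases "p' < l")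
      assume "p < l" "p' < l" then show ?thesis using ii qeq unfolding qq_def by simp
    next
      assume a: "p < l" "\<not> p' < l"
      then have "p \<in> P i" using ip unfolding P_def Tp_def by auto
      moreover have "\<tau> i (p' - l) \<notin> P i" using qqQ[OF ip'] a \<tau> i ii by blast
      ultimately show ?thesis using qeq a ii unfolding qq_def by auto
    next
      assume a: "\<not> p < l" "p' < l"
      then have "p' \<in> P i" using ip' ii unfolding P_def Tp_def by auto
      moreover have "\<tau> i (p - l) \<notin> P i" using qqQ[OF ip] a \<tau> i by blast
      ultimately show ?thesis using qeq a ii unfolding qq_def by auto
    next
      assume a: "\<not> p < l" "\<not> p' < l"
      then have "\<tau> i (p - l) = \<tau> i (p' - l)" using qeq ii unfolding qq_def by simp
      moreover have "p - l \<in> Q i" "p' - l \<in> Q i" using qqQ ip ip' a ii by auto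
      ultimately have "p - l = p' - l" using \<tau> i unfolding inj_on_def by blast
      then show ?thesis using a ii by simp
    qed
  qed
  define \<psi> where "\<psi> = (\<lambda>(i,p). blk_off l r i + p)"
  have \<psi>T: "\<psi> ` Tp = T"
  proof
    show "\<psi> ` Tp \<subseteq> T" unfolding \<psi>_def Tp_def by auto
    show "T \<subseteq> \<psi> ` Tp"
    proof
      fix x assume x: "x \<in> T"
      then have "x < blk_off l r m" using TN by auto
      then obtain i where i: "i < m" "x \<in> blk l r i" using blk_cover[of x l r m] by blast
      define p where "p = x - blk_off l r i"
      have "x = blk_off l r i + p" "p < l + r i" using i unfolding p_def blk_def by auto
      then have "(i,p) \<in> Tp" "x = \<psi> (i,p)" using i x unfolding Tp_def \<psi>_def by auto
      then show "x \<in> \<psi> ` Tp" by blast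
    qed
  qed
  have inj\<psi>: "inj_on \<psi> Tp"
  proof (rule inj_onI, clarify)
    fix i p i' p' assume ip: "(i,p) \<in> Tp" and ip': "(i',p') \<in> Tp" and eq: "\<psi> (i,p) = \<psi> (i',p')"
    have "\<psi> (i,p) \<in> blk l r i" "\<psi> (i',p') \<in> blk l r i'" using ip ip' unfolding \<psi>_def Tp_def blk_def by auto
    then have "i = i'" using eq blk_disj[of i i' l r] by auto
    then show "i = i' \<and> p = p'" using eq unfolding \<psi>_def by simp
  qed
  have finTp: "finite Tp"
  proof -
    have "Tp \<subseteq> {..<m} \<times> {..<blk_off l r m}"
    proof
      fix x assume "x \<in> Tp"
      then obtain i p where "x = (i,p)" "i < m" "blk_off l r i + p \<in> T" unfolding Tp_def by auto
      then show "x \<in> {..<m} \<times> {..<blk_off l r m}" using TN by auto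
    qed
    then show ?thesis by (rule finite_subset) simp
  qed
  have cTp: "card Tp = k" using card_image[OF inj\<psi>] \<psi>T cT by simp
  define T' where "T' = \<mu> ` Tp"
  have cT': "card T' = k" unfolding T'_def using card_image[OF inj\<mu>] cTp by simp
  have finT': "finite T'" unfolding T'_def using finTp by simp
  define J1 where "J1 = T' \<inter> {0..<k}"
  define J2 where "J2 = T' - {0..<k}"
  define R where "R = {0..<k} - J1"
  have cJ: "card J2 = card R"
  proof -
    have "card T' = card J1 + card J2" unfolding J1_def J2_def using finT'
      by (metis Diff_Diff_Int card_Diff_subset_Int card_mono diff_add_inverse finite_Diff Int_lower1 le_add_diff_inverse finite_Int inf_commute)
    moreover have "card R = k - card J1" unfolding R_def by (subst card_Diff_subset) (auto simp: J1_def)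
    ultimately show ?thesis using cT' by simp
  qed
  obtain \<sigma> where \<sigma>: "bij_betw \<sigma> J2 R"
    using finite_same_card_bij[OF _ _ cJ] finT' unfolding J2_def R_def by auto
  define \<alpha>0 where "\<alpha>0 = (\<lambda>(w,z). if k + z \<in> J2 \<and> w = \<sigma> (k+z) then (1::'a) else 0)"
  define \<nu> where "\<nu> c = (if c < k then c else \<sigma> c)" for c
  have Cnu: "Cmat k \<alpha>0 w c = (if w = \<nu> c then 1 else 0)" if c: "c \<in> T'" for w c
  proof (cases "c < k")
    case True then show ?thesis unfolding Cmat_def \<nu>_def by simp
  next
    case False
    then have "c \<in> J2" "k + (c - k) = c" using c unfolding J2_def by auto
    then show ?thesis using False unfolding Cmat_def \<nu>_def \<alpha>0_def by simp
  qed
  have inj\<nu>: "inj_on \<nu> T'"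
  proof (rule inj_onI)
    fix c c' assume c: "c \<in> T'" and c': "c' \<in> T'" and eq: "\<nu> c = \<nu> c'"
    have sR: "\<sigma> x \<in> R" if "x \<in> J2" for x using \<sigma> that unfolding bij_betw_def by auto
    show "c = c'"
    proof (cases "c < k"; cases "c' < k")
      assume "c < k" "c' < k" then show ?thesis using eq unfolding \<nu>_def by simp
    next
      assume a: "c < k" "\<not> c' < k"
      then have "c \<in> J1" "c' \<in> J2" using c c' unfolding J1_def J2_def by auto
      then show ?thesis using eq a sR unfolding \<nu>_def R_def by auto
    next
      assume a: "\<not> c < k" "c' < k"
      then have "c' \<in> J1" "c \<in> J2" using c c' unfolding J1_def J2_def by auto
      then show ?thesis using eq a sR unfolding \<nu>_def R_def by auto
    next
      assume a: "\<not> c < k" "\<not> c' < k"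
      then have "c \<in> J2" "c' \<in> J2" using c c' unfolding J2_def by auto
      then show ?thesis using eq a \<sigma> unfolding \<nu>_def bij_betw_def inj_on_def by auto
    qed
  qed
  have \<nu>sub: "\<nu> ` T' \<subseteq> {0..<k}"
  proof
    fix x assume "x \<in> \<nu> ` T'"
    then obtain c where c: "c \<in> T'" "x = \<nu> c" by blast
    show "x \<in> {0..<k}"
    proof (cases "c < k")
      case True then show ?thesis using c unfolding \<nu>_def by simp
    next
      case False then have "c \<in> J2" using c unfolding J2_def by auto
      then have "\<sigma> c \<in> R" using \<sigma> unfolding bij_betw_def by auto
      then show ?thesis using c False unfolding \<nu>_def R_def by simp
    qed
  qed
  have \<nu>onto: "\<nu> ` T' = {0..<k}"
    by (rule card_subset_eq[OF _ \<nu>sub]) (use card_image[OF inj\<nu>] cT' in simp_all)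
  have "good k (genmat k l m r \<alpha>0 \<beta>0) T"
    unfolding good_def
  proof (intro allI impI)
    fix c w0 assume h: "\<forall>j\<in>T. (\<Sum>w<k. c w * genmat k l m r \<alpha>0 \<beta>0 w j) = 0" and w0: "w0 < k"
    then have "w0 \<in> \<nu> ` T'" using \<nu>onto by simp
    then obtain ip where ip: "ip \<in> Tp" "w0 = \<nu> (\<mu> ip)" unfolding T'_def by auto
    obtain i p where ipe: "ip = (i,p)" by (cases ip)
    have jT: "blk_off l r i + p \<in> T" using ip ipe unfolding Tp_def by auto
    have muT: "\<mu> (i,p) \<in> T'" using ip ipe unfolding T'_def by auto
    have "0 = (\<Sum>w<k. c w * genmat k l m r \<alpha>0 \<beta>0 w (blk_off l r i + p))" using h jT by simp
    also have "\<dots> = (\<Sum>w<k. if w = w0 then c w else 0)"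
      by (rule sum.cong) (auto simp: Gmu[OF ip(1)[unfolded ipe]] Cnu[OF muT] ip(2) ipe)
    also have "\<dots> = c w0" using w0 by simp
    finally show "c w0 = 0" by simp
  qed
  then show ?thesis by blast
qed

lemma det_good:
  fixes G :: "nat \<Rightarrow> nat \<Rightarrow> 'a::field"
  assumes e: "bij_betw e {0..<k} T"
  shows "(det (mat k k (\<lambda>(j,w). G w (e j))) \<noteq> 0) = good k G T"
proof -
  let ?A = "mat k k (\<lambda>(j,w). G w (e j))"
  have A: "?A \<in> carrier_mat k k" by simp
  have Av: "(?A *\<^sub>v v) $ j = (\<Sum>w<k. v $ w * G w (e j))" if "v \<in> carrier_vec k" "j < k" for v j
    using that by (simp add: scalar_prod_def row_def mult.commute lessThan_atLeast0)
  have eT: "e j \<in> T" if "j < k" for j using e that unfolding bij_betw_def by auto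
  have Te: "\<exists>j<k. col = e j" if "col \<in> T" for col using e that unfolding bij_betw_def by auto
  show ?thesis
    unfolding det_0_iff_vec_prod_zero_field[OF A] good_def
  proof
    assume nv: "\<not> (\<exists>v. v \<in> carrier_vec k \<and> v \<noteq> 0\<^sub>v k \<and> ?A *\<^sub>v v = 0\<^sub>v k)"
    show "\<forall>c. (\<forall>j\<in>T. (\<Sum>w<k. c w * G w j) = 0) \<longrightarrow> (\<forall>w<k. c w = 0)"
    proof (intro allI impI)
      fix c w0 assume h: "\<forall>j\<in>T. (\<Sum>w<k. c w * G w j) = 0" and w0: "w0 < k"
      let ?v = "vec k c"
      have vc: "?v \<in> carrier_vec k" by simp
      have "?A *\<^sub>v ?v = 0\<^sub>v k"
      proof (rule eq_vecI)
        fix j assume "j < dim_vec (0\<^sub>v k :: 'a vec)"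
        then have j: "j < k" by simp
        have "(?A *\<^sub>v ?v) $ j = (\<Sum>w<k. c w * G w (e j))" using Av[OF vc j] by simp
        also have "\<dots> = 0" using h eT[OF j] by blast
        finally show "(?A *\<^sub>v ?v) $ j = 0\<^sub>v k $ j" using j by simp
      qed simp
      then have "?v = 0\<^sub>v k" using nv vc by blast
      then have "?v $ w0 = 0" using w0 by simp
      then show "c w0 = 0" using w0 by simp
    qed
  next
    assume g: "\<forall>c. (\<forall>j\<in>T. (\<Sum>w<k. c w * G w j) = 0) \<longrightarrow> (\<forall>w<k. c w = 0)"
    show "\<not> (\<exists>v. v \<in> carrier_vec k \<and> v \<noteq> 0\<^sub>v k \<and> ?A *\<^sub>v v = 0\<^sub>v k)"
    proof
      assume "\<exists>v. v \<in> carrier_vec k \<and> v \<noteq> 0\<^sub>v k \<and> ?A *\<^sub>v v = 0\<^sub>v k"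
      then obtain v where v: "v \<in> carrier_vec k" "v \<noteq> 0\<^sub>v k" "?A *\<^sub>v v = 0\<^sub>v k" by blast
      have "\<forall>col\<in>T. (\<Sum>w<k. v $ w * G w col) = 0"
      proof
        fix col assume "col \<in> T"
        then obtain j where j: "j < k" "col = e j" using Te by blast
        have "(?A *\<^sub>v v) $ j = 0" using v(3) j by simp
        then show "(\<Sum>w<k. v $ w * G w col) = 0" using Av[OF v(1) j(1)] j by simp
      qed
      then have "\<forall>w<k. v $ w = 0" using g by blast
      then have "v = 0\<^sub>v k" using v(1) by (intro eq_vecI) auto
      with v(2) show False by simp
    qed
  qed
qed

lemma pair_transfer:
  "card {(a,b) \<in> (A \<rightarrow>\<^sub>E (UNIV::'c set)) \<times> (B \<rightarrow>\<^sub>E UNIV). P a b} =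
   card {x \<in> (Inl ` A \<union> Inr ` B) \<rightarrow>\<^sub>E UNIV. P (x \<circ> Inl) (x \<circ> Inr)}"
proof (rule bij_betw_same_card[of "\<lambda>(a,b). case_sum a b"])
  show "bij_betw (\<lambda>(a,b). case_sum a b) {(a,b) \<in> (A \<rightarrow>\<^sub>E (UNIV::'c set)) \<times> (B \<rightarrow>\<^sub>E UNIV). P a b}
     {x \<in> (Inl ` A \<union> Inr ` B) \<rightarrow>\<^sub>E UNIV. P (x \<circ> Inl) (x \<circ> Inr)}"
    unfolding bij_betw_def
  proof
    have cl: "case_sum a b \<circ> Inl = a" "case_sum a b \<circ> Inr = b" for a :: "'a \<Rightarrow> 'c" and b :: "'b \<Rightarrow> 'c"
      by (auto simp: fun_eq_iff)
    show "inj_on (\<lambda>(a,b). case_sum a b) {(a,b) \<in> (A \<rightarrow>\<^sub>E (UNIV::'c set)) \<times> (B \<rightarrow>\<^sub>E UNIV). P a b}"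
    proof (rule inj_onI, clarify)
      fix a b a' b' assume "case_sum a b = (case_sum a' b' :: _ \<Rightarrow> 'c)"
      then have "case_sum a b \<circ> Inl = case_sum a' b' \<circ> Inl" "case_sum a b \<circ> Inr = case_sum a' b' \<circ> Inr" by simp_all
      then show "a = a' \<and> b = b'" by (simp add: comp_def)
    qed
    show "(\<lambda>(a,b). case_sum a b) ` {(a,b) \<in> (A \<rightarrow>\<^sub>E (UNIV::'c set)) \<times> (B \<rightarrow>\<^sub>E UNIV). P a b} =
       {x \<in> (Inl ` A \<union> Inr ` B) \<rightarrow>\<^sub>E UNIV. P (x \<circ> Inl) (x \<circ> Inr)}"
    proof
      show "(\<lambda>(a,b). case_sum a b) ` {(a,b) \<in> (A \<rightarrow>\<^sub>E (UNIV::'c set)) \<times> (B \<rightarrow>\<^sub>E UNIV). P a b} \<subseteq>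
          {x \<in> (Inl ` A \<union> Inr ` B) \<rightarrow>\<^sub>E UNIV. P (x \<circ> Inl) (x \<circ> Inr)}"
      proof clarify
        fix a b assume ab: "a \<in> A \<rightarrow>\<^sub>E (UNIV::'c set)" "b \<in> B \<rightarrow>\<^sub>E (UNIV::'c set)" "P a b"
        have "case_sum a b \<in> (Inl ` A \<union> Inr ` B) \<rightarrow>\<^sub>E UNIV"
        proof (rule PiE_I)
          fix v assume "v \<notin> Inl ` A \<union> Inr ` B"
          then show "case_sum a b v = undefined" using ab(1,2) by (cases v) (auto simp: PiE_def extensional_def)
        qed simp
        then show "case_sum a b \<in> (Inl ` A \<union> Inr ` B) \<rightarrow>\<^sub>E UNIV \<and> P (case_sum a b \<circ> Inl) (case_sum a b \<circ> Inr)"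
          unfolding cl using ab(3) by simp
      qed
      show "{x \<in> (Inl ` A \<union> Inr ` B) \<rightarrow>\<^sub>E UNIV. P (x \<circ> Inl) (x \<circ> Inr)} \<subseteq>
          (\<lambda>(a,b). case_sum a b) ` {(a,b) \<in> (A \<rightarrow>\<^sub>E (UNIV::'c set)) \<times> (B \<rightarrow>\<^sub>E UNIV). P a b}"
      proof
        fix x assume x: "x \<in> {x \<in> (Inl ` A \<union> Inr ` B) \<rightarrow>\<^sub>E (UNIV::'c set). P (x \<circ> Inl) (x \<circ> Inr)}"
        have xe: "x = case_sum (x \<circ> Inl) (x \<circ> Inr)" by (auto simp: fun_eq_iff split: sum.split)
        have "x \<circ> Inl \<in> A \<rightarrow>\<^sub>E UNIV" "x \<circ> Inr \<in> B \<rightarrow>\<^sub>E UNIV"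
          using x by (auto simp: PiE_def extensional_def)
        then show "x \<in> (\<lambda>(a,b). case_sum a b) ` {(a,b) \<in> (A \<rightarrow>\<^sub>E (UNIV::'c set)) \<times> (B \<rightarrow>\<^sub>E UNIV). P a b}"
          using x xe by (intro image_eqI[of _ _ "(x \<circ> Inl, x \<circ> Inr)"]) auto
      qed
    qed
  qed
qed

definition Iset :: "nat \<Rightarrow> nat \<Rightarrow> nat \<Rightarrow> (nat \<Rightarrow> nat) \<Rightarrow> nat set" where
  "Iset k l m r = cc l r ` {(i,p). i < m \<and> p < l \<and> i*l+p < k}"

definition Dom :: "nat \<Rightarrow> nat \<Rightarrow> nat \<Rightarrow> nat \<Rightarrow> (nat \<Rightarrow> nat) \<Rightarrow> ((nat \<times> nat) + (nat \<times> nat \<times> nat)) set" where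
  "Dom k s l m r = Inl ` ({0..<k} \<times> {0..<s}) \<union> Inr ` {(t,i,j). t < l \<and> i < m \<and> j < r i}"

lemma cmat_pf:
  assumes setvs: "set vs = Dom k s l m r" and ks: "k + s = m*l" and c': "c' < m*l" and w: "w < k"
  shows "pf vs (if c' < k then 0 else 1) (\<lambda>x::_ \<Rightarrow> 'a::field. Cmat k (x \<circ> Inl) w c')"
proof (cases "c' < k")
  case True
  have eq0: "(\<lambda>x::_ \<Rightarrow> 'a. Cmat k (x \<circ> Inl) w c') = (\<lambda>_. if w = c' then 1 else 0)"
    using True by (simp add: Cmat_def fun_eq_iff)
  show ?thesis unfolding eq0 using True by (simp del: pf.simps add: pf_const)
next
  case False
  have eq1: "(\<lambda>x::_ \<Rightarrow> 'a. Cmat k (x \<circ> Inl) w c') = (\<lambda>x. x (Inl (w, c' - k)))"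
    using False by (simp add: Cmat_def fun_eq_iff)
  have "Inl (w, c' - k) \<in> set vs" using setvs ks c' w False unfolding Dom_def by auto
  then show ?thesis unfolding eq1 using False pf_var[of "Inl (w, c' - k)" vs] by (simp del: pf.simps)
qed

lemma Iset_iff:
  assumes i: "i < m" and p: "p < l + r i"
  shows "blk_off l r i + p \<in> Iset k l m r \<longleftrightarrow> p < l \<and> i*l+p < k"
proof
  assume "p < l \<and> i*l+p < k"
  then show "blk_off l r i + p \<in> Iset k l m r" unfolding Iset_def cc_def using i
    by (intro image_eqI[of _ _ "(i,p)"]) auto
next
  assume "blk_off l r i + p \<in> Iset k l m r"
  then obtain i' p' where ip': "i' < m" "p' < l" "i'*l+p' < k" "blk_off l r i + p = cc l r (i',p')"
    unfolding Iset_def by auto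
  have "blk_off l r i + p \<in> blk l r i" using p unfolding blk_def by simp
  moreover have "cc l r (i',p') \<in> blk l r i'" by (rule cc_blk[OF ip'(2)])
  ultimately have "i = i'" using ip'(4) blk_disj[of i i' l r] by auto
  then show "p < l \<and> i*l+p < k" using ip' unfolding cc_def by simp
qed

lemma entry_pf:
  assumes setvs: "set vs = Dom k s l m r" and ks: "k + s = m*l" and cq: "cq < blk_off l r m" and w: "w < k"
  shows "pf vs (if cq \<in> Iset k l m r then 0 else 2)
     (\<lambda>x::_ \<Rightarrow> 'a::field. genmat k l m r (x \<circ> Inl) (x \<circ> Inr) w cq)"
proof -
  obtain i where i: "i < m" "cq \<in> blk l r i" using blk_cover[OF cq] by blast
  define p where "p = cq - blk_off l r i"
  have cqp: "cq = blk_off l r i + p" and p: "p < l + r i" using i(2) unfolding p_def blk_def by auto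
  show ?thesis
  proof (cases "p < l")
    case True
    have eq: "(\<lambda>x::_ \<Rightarrow> 'a. genmat k l m r (x \<circ> Inl) (x \<circ> Inr) w cq) = (\<lambda>x. Cmat k (x \<circ> Inl) w (i*l+p))"
    proof
      fix x :: "_ \<Rightarrow> 'a"
      show "genmat k l m r (x \<circ> Inl) (x \<circ> Inr) w cq = Cmat k (x \<circ> Inl) w (i*l+p)"
        unfolding cqp using genmat_blk[of i m p l r k "x \<circ> Inl" "x \<circ> Inr" w, OF i(1) p] True by simp
    qed
    have lt: "i*l+p < m*l"
    proof -
      have "i*l+p < i*l + l" using True by simp
      also have "\<dots> = Suc i * l" by simp
      also have "\<dots> \<le> m*l" using i(1) by (intro mult_right_mono) auto
      finally show ?thesis .
    qed
    have I: "cq \<in> Iset k l m r \<longleftrightarrow> i*l+p < k" unfolding cqp using Iset_iff[of i m p l r k, OF i(1) p] True by simp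
    have "pf vs (if i*l+p < k then 0 else 1) (\<lambda>x::_ \<Rightarrow> 'a. Cmat k (x \<circ> Inl) w (i*l+p))"
      by (rule cmat_pf[OF setvs ks lt w])
    then show ?thesis unfolding eq I by (cases "i*l+p < k") (auto elim: pf_mono simp del: pf.simps)
  next
    case False
    have I: "cq \<notin> Iset k l m r" unfolding cqp using Iset_iff[of i m p l r k, OF i(1) p] False by simp
    have eq: "(\<lambda>x::_ \<Rightarrow> 'a. genmat k l m r (x \<circ> Inl) (x \<circ> Inr) w cq) =
       (\<lambda>x. \<Sum>t<l. x (Inr (t,i,p-l)) * Cmat k (x \<circ> Inl) w (i*l+t))"
    proof
      fix x :: "_ \<Rightarrow> 'a"
      show "genmat k l m r (x \<circ> Inl) (x \<circ> Inr) w cq = (\<Sum>t<l. x (Inr (t,i,p-l)) * Cmat k (x \<circ> Inl) w (i*l+t))"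
        unfolding cqp using genmat_blk[of i m p l r k "x \<circ> Inl" "x \<circ> Inr" w, OF i(1) p] False by simp
    qed
    have "pf vs 2 (\<lambda>x::_ \<Rightarrow> 'a. x (Inr (t,i,p-l)) * Cmat k (x \<circ> Inl) w (i*l+t))" if t: "t < l" for t
    proof -
      have "Inr (t,i,p-l) \<in> set vs" using setvs t i(1) p False unfolding Dom_def by auto
      then have v: "pf vs 1 (\<lambda>x::_ \<Rightarrow> 'a. x (Inr (t,i,p-l)))" by (rule pf_var)
      have lt: "i*l+t < m*l"
      proof -
        have "i*l+t < i*l + l" using t by simp
        also have "\<dots> = Suc i * l" by simp
        also have "\<dots> \<le> m*l" using i(1) by (intro mult_right_mono) auto
        finally show ?thesis .
      qed
      have "pf vs 1 (\<lambda>x::_ \<Rightarrow> 'a. Cmat k (x \<circ> Inl) w (i*l+t))"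
        using cmat_pf[OF setvs ks lt w] by (cases "i*l+t < k") (auto elim: pf_mono simp del: pf.simps)
      from pf_mul[OF v this, unfolded one_add_one] show ?thesis .
    qed
    then have "pf vs 2 (\<lambda>x::_ \<Rightarrow> 'a. \<Sum>t<l. x (Inr (t,i,p-l)) * Cmat k (x \<circ> Inl) w (i*l+t))"
      by (intro pf_sum) auto
    then show ?thesis unfolding eq using I by simp
  qed
qed

lemma sum_dcol: "finite T \<Longrightarrow> (\<Sum>c\<in>T. if c \<in> I then 0 else 2) = 2 * card (T - I)"
proof -
  assume fT: "finite T"
  have "(\<Sum>c\<in>T. if c \<in> I then 0 else 2) = (\<Sum>c\<in>T - I. (2::nat))"
    by (rule sum.mono_neutral_cong_right) (use fT in auto)
  then show ?thesis by simp
qed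

lemma det_pf:
  assumes setvs: "set vs = Dom k s l m r" and ks: "k + s = m*l"
    and TN: "T \<subseteq> {0..<blk_off l r m}" and e: "bij_betw e {0..<k} T"
  shows "pf vs (2 * card (T - Iset k l m r))
    (\<lambda>x::_ \<Rightarrow> 'a::field. det (mat k k (\<lambda>(j,w). genmat k l m r (x \<circ> Inl) (x \<circ> Inr) w (e j))))"
proof -
  let ?G = "\<lambda>(x::_ \<Rightarrow> 'a) w c. genmat k l m r (x \<circ> Inl) (x \<circ> Inr) w c"
  let ?d = "\<lambda>c. if c \<in> Iset k l m r then 0 else (2::nat)"
  have eT: "e j \<in> T" if "j < k" for j using e that unfolding bij_betw_def by auto
  have eq: "(\<lambda>x. det (mat k k (\<lambda>(j,w). ?G x w (e j)))) =
     (\<lambda>x. \<Sum>p\<in>{p. p permutes {0..<k}}. of_int (sign p) * (\<Prod>j\<in>{0..<k}. ?G x (p j) (e j)))"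
  proof
    fix x
    have "det (mat k k (\<lambda>(j,w). ?G x w (e j))) =
      (\<Sum>p\<in>{p. p permutes {0..<k}}. of_int (sign p) * (\<Prod>j = 0..<k. mat k k (\<lambda>(j,w). ?G x w (e j)) $$ (j, p j)))"
      by (rule det_def') simp
    also have "\<dots> = (\<Sum>p\<in>{p. p permutes {0..<k}}. of_int (sign p) * (\<Prod>j\<in>{0..<k}. ?G x (p j) (e j)))"
    proof (rule sum.cong[OF refl])
      fix p assume "p \<in> {p. p permutes {0..<k}}"
      then have pp: "p permutes {0..<k}" by simp
      have "j < k \<Longrightarrow> p j < k" for j using permutes_in_image[OF pp, of j] by simp
      then show "of_int (sign p) * (\<Prod>j = 0..<k. mat k k (\<lambda>(j,w). ?G x w (e j)) $$ (j, p j)) =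
          of_int (sign p) * (\<Prod>j\<in>{0..<k}. ?G x (p j) (e j))"
        by (intro arg_cong2[where f="(*)"] refl prod.cong) auto
    qed
    finally show "det (mat k k (\<lambda>(j,w). ?G x w (e j))) =
      (\<Sum>p\<in>{p. p permutes {0..<k}}. of_int (sign p) * (\<Prod>j\<in>{0..<k}. ?G x (p j) (e j)))" .
  qed
  have dsum: "(\<Sum>j\<in>{0..<k}. ?d (e j)) = 2 * card (T - Iset k l m r)"
  proof -
    have finT: "finite T" using bij_betw_finite[OF e] by simp
    show ?thesis using sum.reindex_bij_betw[OF e, of ?d] sum_dcol[OF finT, of "Iset k l m r"] by simp
  qed
  have trm: "pf vs (2 * card (T - Iset k l m r)) (\<lambda>x. of_int (sign p) * (\<Prod>j\<in>{0..<k}. ?G x (p j) (e j)))"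
    if pp: "p permutes {0..<k}" for p
  proof -
    have pj: "j < k \<Longrightarrow> p j < k" for j using permutes_in_image[OF pp, of j] by simp
    have "pf vs (\<Sum>j\<in>{0..<k}. ?d (e j)) (\<lambda>x. \<Prod>j\<in>{0..<k}. ?G x (p j) (e j))"
    proof (rule pf_prod)
      fix j assume "j \<in> {0..<k}"
      then have j: "j < k" by simp
      have "e j < blk_off l r m" using eT[OF j] TN by auto
      from entry_pf[OF setvs ks this pj[OF j]]
      show "pf vs (?d (e j)) (\<lambda>x. ?G x (p j) (e j))" by simp
    qed simp
    from pf_mul[OF pf_const[of vs 0 "of_int (sign p)"] this] show ?thesis unfolding dsum by simp
  qed
  have "pf vs (2 * card (T - Iset k l m r))
     (\<lambda>x. \<Sum>p\<in>{p. p permutes {0..<k}}. of_int (sign p) * (\<Prod>j\<in>{0..<k}. ?G x (p j) (e j)))"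
    by (rule pf_sum) (auto intro: finite_permutations trm)
  then show ?thesis unfolding eq .
qed

lemma finite_Dbeta: "finite {(t,i,j). t < l \<and> i < m \<and> j < (r i::nat)}" for l m :: nat
proof -
  have "{(t,i,j). t < l \<and> i < m \<and> j < r i} = {..<l} \<times> (SIGMA i:{..<m}. {..<r i})" by auto
  show ?thesis unfolding \<open>_ = _\<close> by (intro finite_cartesian_product finite_SigmaI) auto
qed

lemma count_T:
  fixes k l m s :: nat and r :: "nat \<Rightarrow> nat" and T :: "nat set"
  assumes ks: "k + s = m*l" and l1: "1 \<le> l" and adm: "adm k l m r T"
  shows "card {(\<alpha>,\<beta>) \<in> ({0..<k}\<times>{0..<s} \<rightarrow>\<^sub>E (UNIV::'a::{finite,field} set)) \<times> ({(t,i,j). t<l \<and> i<m \<and> j<r i} \<rightarrow>\<^sub>E UNIV).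
              \<not> good k (genmat k l m r \<alpha> \<beta>) T} * card (UNIV::'a set)
     \<le> 2 * card (T - Iset k l m r) * card (({0..<k}\<times>{0..<s} \<rightarrow>\<^sub>E (UNIV::'a set)) \<times> ({(t,i,j). t<l \<and> i<m \<and> j<r i} \<rightarrow>\<^sub>E (UNIV::'a set)))"
proof -
  let ?Da = "{0..<k}\<times>{0..<s}"
  let ?Db = "{(t,i,j). t<l \<and> i<m \<and> j<r i}"
  let ?D = "Dom k s l m r"
  have finD: "finite ?D" unfolding Dom_def using finite_Dbeta by simp
  obtain vs where vs: "set vs = ?D" "distinct vs" using finite_distinct_list[OF finD] by blast
  have TN: "T \<subseteq> {0..<blk_off l r m}" and cT: "card T = k" using adm unfolding adm_def by auto
  have finT: "finite T" using TN finite_subset by blast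
  obtain e where e: "bij_betw e {0..<k} T" using ex_bij_betw_nat_finite[OF finT] cT by auto
  define f where "f x = det (mat k k (\<lambda>(j,w). genmat k l m r (x \<circ> Inl) (x \<circ> Inr) w (e j)))"
    for x :: "_ \<Rightarrow> 'a"
  have fgood: "f x \<noteq> 0 \<longleftrightarrow> good k (genmat k l m r (x \<circ> Inl) (x \<circ> Inr)) T" for x
    unfolding f_def by (rule det_good[OF e])
  have pff: "pf vs (2 * card (T - Iset k l m r)) f"
    unfolding f_def[abs_def] by (rule det_pf[OF vs(1) ks TN e])
  have kml: "k \<le> m * l" using ks by simp
  obtain \<alpha>0 \<beta>0 where g0: "good k (genmat k l m r (\<alpha>0 :: nat \<times> nat \<Rightarrow> 'a) \<beta>0) T"
    using witness[OF l1 kml adm] by blast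
  define x0 where "x0 = case_sum \<alpha>0 \<beta>0"
  have "x0 \<circ> Inl = \<alpha>0" "x0 \<circ> Inr = \<beta>0" unfolding x0_def by (auto simp: fun_eq_iff)
  then have fx0: "f x0 \<noteq> 0" using fgood g0 by simp
  have SZ': "card {x \<in> set vs \<rightarrow>\<^sub>E (UNIV::'a set). f x = 0} * card (UNIV::'a set)
      \<le> 2 * card (T - Iset k l m r) * card (UNIV::'a set) ^ length vs"
    by (rule SZ[OF vs(2) pff fx0])
  have "card {(\<alpha>,\<beta>) \<in> (?Da \<rightarrow>\<^sub>E (UNIV::'a set)) \<times> (?Db \<rightarrow>\<^sub>E UNIV). \<not> good k (genmat k l m r \<alpha> \<beta>) T}
     = card {x \<in> ?D \<rightarrow>\<^sub>E (UNIV::'a set). \<not> good k (genmat k l m r (x \<circ> Inl) (x \<circ> Inr)) T}"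
    unfolding Dom_def by (rule pair_transfer)
  also have "\<dots> = card {x \<in> set vs \<rightarrow>\<^sub>E (UNIV::'a set). f x = 0}"
  proof -
    have fz: "(f x = 0) = (\<not> good k (genmat k l m r (x \<circ> Inl) (x \<circ> Inr)) T)" for x using fgood[of x] by blast
    show ?thesis unfolding fz vs(1) ..
  qed
  finally have L: "card {(\<alpha>,\<beta>) \<in> (?Da \<rightarrow>\<^sub>E (UNIV::'a set)) \<times> (?Db \<rightarrow>\<^sub>E UNIV). \<not> good k (genmat k l m r \<alpha> \<beta>) T}
     = card {x \<in> set vs \<rightarrow>\<^sub>E (UNIV::'a set). f x = 0}" .
  have "card ((?Da \<rightarrow>\<^sub>E (UNIV::'a set)) \<times> (?Db \<rightarrow>\<^sub>E (UNIV::'a set))) =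
      card {(\<alpha>,\<beta>) \<in> (?Da \<rightarrow>\<^sub>E (UNIV::'a set)) \<times> (?Db \<rightarrow>\<^sub>E (UNIV::'a set)). True}"
  proof -
    have eqs: "{(\<alpha>,\<beta>) \<in> (?Da \<rightarrow>\<^sub>E (UNIV::'a set)) \<times> (?Db \<rightarrow>\<^sub>E (UNIV::'a set)). True} = (?Da \<rightarrow>\<^sub>E (UNIV::'a set)) \<times> (?Db \<rightarrow>\<^sub>E (UNIV::'a set))"
      by auto
    show ?thesis by (simp only: eqs)
  qed
  also have "\<dots> = card {x \<in> ?D \<rightarrow>\<^sub>E (UNIV::'a set). True}"
    unfolding Dom_def by (rule pair_transfer)
  also have "\<dots> = card (UNIV::'a set) ^ length vs"
  proof -
    have "card ?D = length vs" using distinct_card[OF vs(2)] vs(1) by simp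
    then show ?thesis using finD by (simp add: card_PiE)
  qed
  finally have R: "card ((?Da \<rightarrow>\<^sub>E (UNIV::'a set)) \<times> (?Db \<rightarrow>\<^sub>E (UNIV::'a set))) = card (UNIV::'a set) ^ length vs" .
  show ?thesis unfolding L R by (rule SZ')
qed

lemma Iset_props:
  assumes kml: "k \<le> m*l" and l1: "1 \<le> l"
  shows "Iset k l m r \<subseteq> {0..<blk_off l r m}" "card (Iset k l m r) = k"
proof -
  let ?S = "{(i,p). i < m \<and> p < l \<and> i*l+p < k}"
  have S: "?S \<subseteq> {0..<m} \<times> {0..<l}" by auto
  show "Iset k l m r \<subseteq> {0..<blk_off l r m}" unfolding Iset_def
    using image_mono[OF S, of "cc l r"] cc_sub[of "{0..<m}" m l r] by auto
  have "card (Iset k l m r) = card ?S" unfolding Iset_def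
    by (rule card_image[OF inj_on_subset[OF cc_inj S]])
  also have "card ?S = k"
  proof -
    have "bij_betw (\<lambda>(i,p). i*l+p) ?S {0..<k}"
    proof (rule bij_betw_imageI)
      show "inj_on (\<lambda>(i,p). i*l+p) ?S"
        by (rule inj_onI, clarify) (use divmod_uniq in blast)
      show "(\<lambda>(i,p). i*l+p) ` ?S = {0..<k}"
      proof
        show "(\<lambda>(i,p). i*l+p) ` ?S \<subseteq> {0..<k}" by auto
        show "{0..<k} \<subseteq> (\<lambda>(i,p). i*l+p) ` ?S"
        proof
          fix c assume c: "c \<in> {0..<k}"
          have l0: "l > 0" using l1 by simp
          have "c div l < m"
          proof (rule ccontr)
            assume "\<not> c div l < m"
            then have "m * l \<le> (c div l) * l" by simp
            also have "\<dots> \<le> c" by (simp add: div_times_less_eq_dividend)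
            finally show False using c kml by simp
          qed
          moreover have "c mod l < l" using l0 by simp
          moreover have "(c div l) * l + c mod l = c" by simp
          ultimately show "c \<in> (\<lambda>(i,p). i*l+p) ` ?S" using c
            by (intro image_eqI[of _ _ "(c div l, c mod l)"]) auto
        qed
      qed
    qed
    then show ?thesis by (simp add: bij_betw_same_card)
  qed
  finally show "card (Iset k l m r) = k" .
qed

lemma card_subsets_containing:
  assumes fA: "finite A" and c: "c \<in> A" and k1: "1 \<le> k"
  shows "card {T. T \<subseteq> A \<and> card T = k \<and> c \<in> T} = (card A - 1) choose (k - 1)"
proof -
  have "bij_betw (\<lambda>T. T - {c}) {T. T \<subseteq> A \<and> card T = k \<and> c \<in> T} {T. T \<subseteq> A - {c} \<and> card T = k - 1}"
  proof (rule bij_betw_byWitness[where f'="insert c"])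
    show "\<forall>T\<in>{T. T \<subseteq> A \<and> card T = k \<and> c \<in> T}. insert c (T - {c}) = T" by auto
    show "\<forall>T\<in>{T. T \<subseteq> A - {c} \<and> card T = k - 1}. insert c T - {c} = T" by auto
    show "(\<lambda>T. T - {c}) ` {T. T \<subseteq> A \<and> card T = k \<and> c \<in> T} \<subseteq> {T. T \<subseteq> A - {c} \<and> card T = k - 1}"
      using fA by (auto simp: finite_subset)
    show "insert c ` {T. T \<subseteq> A - {c} \<and> card T = k - 1} \<subseteq> {T. T \<subseteq> A \<and> card T = k \<and> c \<in> T}"
    proof (rule image_subsetI)
      fix T assume "T \<in> {T. T \<subseteq> A - {c} \<and> card T = k - 1}"
      then have T: "T \<subseteq> A - {c}" "k - 1 = card T" by auto
      have "finite T" using T(1) fA finite_subset by blast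
      moreover have "c \<notin> T" using T(1) by blast
      ultimately have "card (insert c T) = Suc (card T)" by simp
      then have "card (insert c T) = k" using T(2) k1 by simp
      then show "insert c T \<in> {T. T \<subseteq> A \<and> card T = k \<and> c \<in> T}" using T c by auto
    qed
  qed
  then have "card {T. T \<subseteq> A \<and> card T = k \<and> c \<in> T} = card {T. T \<subseteq> A - {c} \<and> card T = k - 1}"
    by (rule bij_betw_same_card)
  also have "\<dots> = card (A - {c}) choose (k - 1)" using fA by (simp add: n_subsets)
  also have "card (A - {c}) = card A - 1" using c fA by simp
  finally show ?thesis .
qed

lemma sum_card_diff:
  assumes fA: "finite A" and IA: "I \<subseteq> A" and cI: "card I = k" and k1: "1 \<le> k"
  shows "(\<Sum>T\<in>{T. T \<subseteq> A \<and> card T = k}. card (T - I)) = (card A - k) * ((card A - 1) choose (k - 1))"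
proof -
  let ?K = "{T. T \<subseteq> A \<and> card T = k}"
  have finK: "finite ?K" using fA by simp
  have "(\<Sum>T\<in>?K. card (T - I)) = (\<Sum>T\<in>?K. \<Sum>c\<in>A - I. if c \<in> T then 1 else 0)"
  proof (rule sum.cong[OF refl])
    fix T assume "T \<in> ?K"
    then have TA: "T \<subseteq> A" by simp
    have "(\<Sum>c\<in>A - I. if c \<in> T then 1 else (0::nat)) = card ((A - I) \<inter> T)"
      using sum.inter_restrict[of "A - I" "\<lambda>_. (1::nat)" T] fA by simp
    also have "(A - I) \<inter> T = T - I" using TA by blast
    finally show "card (T - I) = (\<Sum>c\<in>A - I. if c \<in> T then 1 else 0)" by simp
  qed
  also have "\<dots> = (\<Sum>c\<in>A - I. \<Sum>T\<in>?K. if c \<in> T then 1 else 0)" by (rule sum.swap)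
  also have "\<dots> = (\<Sum>c\<in>A - I. (card A - 1) choose (k - 1))"
  proof (rule sum.cong[OF refl])
    fix c assume c: "c \<in> A - I"
    have "(\<Sum>T\<in>?K. if c \<in> T then 1 else (0::nat)) = card (?K \<inter> {T. c \<in> T})"
      using sum.inter_restrict[of ?K "\<lambda>_. (1::nat)" "{T. c \<in> T}"] finK by simp
    also have "?K \<inter> {T. c \<in> T} = {T. T \<subseteq> A \<and> card T = k \<and> c \<in> T}" by blast
    also have "card \<dots> = (card A - 1) choose (k - 1)" using card_subsets_containing[OF fA _ k1] c by simp
    finally show "(\<Sum>T\<in>?K. if c \<in> T then 1 else 0) = (card A - 1) choose (k - 1)" .
  qed
  also have "\<dots> = card (A - I) * ((card A - 1) choose (k - 1))" by simp
  also have "card (A - I) = card A - k" using IA cI fA by (simp add: card_Diff_subset finite_subset)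
  finally show ?thesis .
qed

theorem theorem20:
  fixes m s l k n :: nat and r :: "nat \<Rightarrow> nat"
  assumes "m \<ge> 2" and "s \<ge> 1" and "l \<ge> 1" and "\<forall>i<m. r i \<ge> 1"
    and "k = m * l - s" and "k \<ge> l"
    and "n = (\<Sum>i<m. l + r i)"
  shows "real (card {(\<alpha>, \<beta>) \<in>
              ({0..<k} \<times> {0..<s} \<rightarrow>\<^sub>E (UNIV :: 'a::{finite,field} set)) \<times>
              ({(t, i, j). t < l \<and> i < m \<and> j < r i} \<rightarrow>\<^sub>E (UNIV :: 'a set)).
              is_PMDS k l m r (row_space k n (genmat k l m r \<alpha> \<beta>))})
         / real (card (({0..<k} \<times> {0..<s} \<rightarrow>\<^sub>E (UNIV :: 'a::{finite,field} set)) \<times>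
              ({(t, i, j). t < l \<and> i < m \<and> j < r i} \<rightarrow>\<^sub>E (UNIV :: 'a set))))
       \<ge> 1 - 2 * real (n - k) * real ((n - 1) choose (k - 1)) / real (card (UNIV :: 'a set))"
proof -
  note l1 = assms(3) and kdef = assms(5) and kl = assms(6) and ndef = assms(7)
  have k1: "1 \<le> k" using l1 kl by simp
  have ks: "k + s = m * l" using kdef k1 by simp
  have kml: "k < m * l" using ks assms(2) by simp
  have nN: "n = blk_off l r m" using ndef by (simp add: blk_off_def)
  let ?X = "{0..<k} \<times> {0..<s} \<rightarrow>\<^sub>E (UNIV :: 'a set)"
  let ?Y = "{(t, i, j). t < l \<and> i < m \<and> j < r i} \<rightarrow>\<^sub>E (UNIV :: 'a set)"
  let ?\<Omega> = "?X \<times> ?Y"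
  let ?P = "\<lambda>\<alpha> \<beta>. is_PMDS k l m r (row_space k n (genmat k l m r \<alpha> \<beta>))"
  define Gd where "Gd = {(\<alpha>, \<beta>) \<in> ?\<Omega>. ?P \<alpha> \<beta>}"
  define Bd where "Bd = {(\<alpha>, \<beta>) \<in> ?\<Omega>. \<not> ?P \<alpha> \<beta>}"
  define q where "q = card (UNIV :: 'a set)"
  define C where "C = (n - 1) choose (k - 1)"
  have finO: "finite ?\<Omega>" using finite_Dbeta[of l m r] by (simp add: finite_PiE)
  have q0: "q > 0" unfolding q_def by (simp add: finite_UNIV_card_ge_0)
  have O0: "card ?\<Omega> > 0"
  proof -
    have "?X \<noteq> {}" "?Y \<noteq> {}" by (simp_all add: PiE_eq_empty_iff)
    then have "?\<Omega> \<noteq> {}" by simp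
    then show ?thesis using finO by (simp add: card_gt_0_iff)
  qed
  have part: "card Gd + card Bd = card ?\<Omega>"
  proof -
    have "Gd \<union> Bd = ?\<Omega>" "Gd \<inter> Bd = {}" unfolding Gd_def Bd_def by auto
    moreover have "finite Gd" by (rule finite_subset[OF _ finO]) (auto simp: Gd_def)
    moreover have "finite Bd" by (rule finite_subset[OF _ finO]) (auto simp: Bd_def)
    ultimately show ?thesis using card_Un_disjoint by metis
  qed
  define Adm where "Adm = {T. adm k l m r T}"
  define Kset where "Kset = {T. T \<subseteq> {0..<n} \<and> card T = k}"
  have AK: "Adm \<subseteq> Kset" unfolding Adm_def Kset_def adm_def nN by auto
  have finK: "finite Kset" unfolding Kset_def by simp
  have finAdm: "finite Adm" using finite_subset[OF AK finK] .
  define B where "B T = {(\<alpha>, \<beta>) \<in> ?\<Omega>. \<not> good k (genmat k l m r \<alpha> \<beta>) T}" for T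
  have BdU: "Bd \<subseteq> (\<Union>T\<in>Adm. B T)"
  proof
    fix \<omega> assume "\<omega> \<in> Bd"
    then obtain \<alpha> \<beta> where w: "\<omega> = (\<alpha>, \<beta>)" "(\<alpha>, \<beta>) \<in> ?\<Omega>" "\<not> ?P \<alpha> \<beta>" unfolding Bd_def by auto
    have "\<exists>T. adm k l m r T \<and> \<not> good k (genmat k l m r \<alpha> \<beta>) T"
    proof (rule ccontr)
      assume "\<not> ?thesis"
      then have "\<And>T. adm k l m r T \<Longrightarrow> good k (genmat k l m r \<alpha> \<beta>) T" by blast
      from PMDS_of_good[OF kl l1 kml this] have "?P \<alpha> \<beta>" unfolding ndef .
      with w(3) show False by simp
    qed
    then show "\<omega> \<in> (\<Union>T\<in>Adm. B T)" using w unfolding Adm_def B_def by auto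
  qed
  have "card Bd \<le> card (\<Union>T\<in>Adm. B T)"
  proof (rule card_mono[OF _ BdU])
    have "(\<Union>T\<in>Adm. B T) \<subseteq> ?\<Omega>" unfolding B_def by auto
    then show "finite (\<Union>T\<in>Adm. B T)" using finO finite_subset by blast
  qed
  also have "\<dots> \<le> (\<Sum>T\<in>Adm. card (B T))" by (rule card_UN_le[OF finAdm])
  finally have cB: "card Bd \<le> (\<Sum>T\<in>Adm. card (B T))" .
  have "card Bd * q \<le> (\<Sum>T\<in>Adm. card (B T)) * q" using cB by (rule mult_right_mono) simp
  also have "\<dots> = (\<Sum>T\<in>Adm. card (B T) * q)" by (rule sum_distrib_right)
  also have "\<dots> \<le> (\<Sum>T\<in>Adm. 2 * card (T - Iset k l m r) * card ?\<Omega>)"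
  proof (rule sum_mono)
    fix T assume "T \<in> Adm"
    then have "adm k l m r T" unfolding Adm_def by simp
    from count_T[OF ks l1 this, where 'a='a]
    show "card (B T) * q \<le> 2 * card (T - Iset k l m r) * card ?\<Omega>" unfolding B_def q_def .
  qed
  also have "\<dots> \<le> (\<Sum>T\<in>Kset. 2 * card (T - Iset k l m r) * card ?\<Omega>)"
    by (rule sum_mono2[OF finK AK]) simp
  also have "\<dots> = 2 * card ?\<Omega> * (\<Sum>T\<in>Kset. card (T - Iset k l m r))"
    by (simp add: sum_distrib_left sum_distrib_right mult_ac)
  also have "(\<Sum>T\<in>Kset. card (T - Iset k l m r)) = (n - k) * C"
  proof -
    have "Iset k l m r \<subseteq> {0..<n}" "card (Iset k l m r) = k"
      using Iset_props[of k m l r] kml l1 nN by auto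
    from sum_card_diff[OF _ this k1] show ?thesis unfolding Kset_def C_def by simp
  qed
  finally have main: "card Bd * q \<le> 2 * card ?\<Omega> * ((n - k) * C)" .
  have mainR: "real (card Bd) * real q \<le> 2 * real (n - k) * real C * real (card ?\<Omega>)"
  proof -
    have "real (card Bd * q) \<le> real (2 * card ?\<Omega> * ((n - k) * C))" using main by (simp only: of_nat_le_iff)
    then show ?thesis by (simp add: mult_ac)
  qed
  have ratio: "real (card Bd) / real (card ?\<Omega>) \<le> 2 * real (n - k) * real C / real q"
    using mainR q0 O0 by (simp add: divide_le_eq le_divide_eq mult_ac)
  have "real (card Gd) / real (card ?\<Omega>) = 1 - real (card Bd) / real (card ?\<Omega>)"
  proof -
    have "real (card Gd) = real (card ?\<Omega>) - real (card Bd)" using part by simp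
    then show ?thesis using O0 by (simp add: diff_divide_distrib)
  qed
  also have "\<dots> \<ge> 1 - 2 * real (n - k) * real C / real q" using ratio by simp
  finally show ?thesis unfolding Gd_def q_def C_def by simp
qed

end
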